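(* Let $\alpha_1,\mu_1\in\mathbb R$, $m\ge2$ an integer, and consider $$\partial_t u+u\,u_{xxx}+\alpha_1u_xu_{xx}+\frac{\mu_1}{m}(u^m)_x=0. \qquad(\ast)$$ Let $I=[a,b]$, $0<\alpha\le1$, and let $f\in L^\infty([0,\delta];\widetilde C^{3,\alpha}(I))$ be a solution of $(\ast)$ whose initial data $f_0$ is positive on $I\setminus\partial I$ and vanishes to order at least $3$ at each point of $\partial I$. Then: (1) for all $t\in[0,\delta]$, $f(t,\cdot)$ vanishes on $\partial I$ and $f(t,x)>0$ for $x\in I\setminus\partial I$; (2) the functions $t\mapsto\partial_x^kf(t,a)$, $k=0,1,2,3$, on $[0,\delta]$ are determined by the initial values $\partial_x^kf(0,a)$, $k=0,\dots,3$ (i.e. any two such solutions with the same values of $\partial_x^kf(0,a)$, $k\le3$, have the same $\partial_x^kf(t,a)$, $k\le 3$, for all $t\in[0,\delta]$). In particular, $$f(t,x)=(\beta(t)(x-a))^3+O\big(\|f\|_{L^\infty([0,\delta];C^{3,\alpha}(I))}|x-a|^{3+\alpha}\big)\quad\text{as }x\to a^+,$$ where the implicit constant in $O(\cdot)$ is universal and $\beta$ solves $\dot\beta(t)=-(2+6\alpha_1)\beta^4(t)$, $6\beta^3(0)=f_{0,xxx}(a)$. The analogous statements hold at the endpoint $b$.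
   Context: For a $C^{2,1}$ function $f$ on an interval $I$, $\|f\|_{Y(I)}=\|f^{-2/3}\partial_xf\|_{L^\infty(I)}^3+\|f^{-1/3}\partial_{xx}f\|_{L^\infty(I)}^{3/2}+\|f\|_{L^\infty(I)}+\|\partial_{xxx}f\|_{L^\infty(I)}$, and $\|f\|_{\widetilde C^{k,\alpha}(I)}=\|f\|_{C^{k,\alpha}(I)}+\|f\|_{Y(I)}$. For time-dependent $f$, $\|f\|_{L^\infty([0,\delta];\widetilde C^{k,\alpha}(I))}=\sup_{t\in[0,\delta]}\|f(t)\|_{\widetilde C^{k,\alpha}(I)}$, and $f$ belongs to this space if this is finite. *)

theory Defs
  imports "HOL-Analysis.Analysis"
begin

definition dx :: "real set \<Rightarrow> (real \<Rightarrow> real) \<Rightarrow> real \<Rightarrow> real" where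
  "dx I g = (\<lambda>x. vector_derivative g (at x within I))"

definition Dx :: "real set \<Rightarrow> nat \<Rightarrow> (real \<Rightarrow> real) \<Rightarrow> real \<Rightarrow> real" where
  "Dx I k g = (dx I ^^ k) g"

definition supn :: "real set \<Rightarrow> (real \<Rightarrow> real) \<Rightarrow> real" where
  "supn S h = Sup (insert 0 ((\<lambda>x. \<bar>h x\<bar>) ` S))"

definition holder_set :: "real \<Rightarrow> real set \<Rightarrow> (real \<Rightarrow> real) \<Rightarrow> real set" where
  "holder_set \<alpha> I h = {\<bar>h x - h y\<bar> / \<bar>x - y\<bar> powr \<alpha> | x y. x \<in> I \<and> y \<in> I \<and> x \<noteq> y}"

definition holder_semi :: "real \<Rightarrow> real set \<Rightarrow> (real \<Rightarrow> real) \<Rightarrow> real" where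
  "holder_semi \<alpha> I h = Sup (insert 0 (holder_set \<alpha> I h))"

definition in_C :: "nat \<Rightarrow> real \<Rightarrow> real set \<Rightarrow> (real \<Rightarrow> real) \<Rightarrow> bool" where
  "in_C k \<alpha> I g \<longleftrightarrow>
     (\<forall>j<k. \<forall>x\<in>I. (Dx I j g has_vector_derivative Dx I (Suc j) g x) (at x within I)) \<and>
     (\<forall>j\<le>k. bdd_above ((\<lambda>x. \<bar>Dx I j g x\<bar>) ` I)) \<and>
     bdd_above (holder_set \<alpha> I (Dx I k g))"

definition C_norm :: "nat \<Rightarrow> real \<Rightarrow> real set \<Rightarrow> (real \<Rightarrow> real) \<Rightarrow> real" where
  "C_norm k \<alpha> I g = (\<Sum>j\<le>k. supn I (Dx I j g)) + holder_semi \<alpha> I (Dx I k g)"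

(* The Y(I) quantities; the singular weights are evaluated where g does not vanish. *)
definition Y1 :: "real set \<Rightarrow> (real \<Rightarrow> real) \<Rightarrow> real \<Rightarrow> real" where
  "Y1 I g = (\<lambda>x. \<bar>g x\<bar> powr (-2/3) * Dx I 1 g x)"

definition Y2 :: "real set \<Rightarrow> (real \<Rightarrow> real) \<Rightarrow> real \<Rightarrow> real" where
  "Y2 I g = (\<lambda>x. \<bar>g x\<bar> powr (-1/3) * Dx I 2 g x)"

definition Y_norm :: "real set \<Rightarrow> (real \<Rightarrow> real) \<Rightarrow> real" where
  "Y_norm I g = supn {x\<in>I. g x \<noteq> 0} (Y1 I g) ^ 3
              + supn {x\<in>I. g x \<noteq> 0} (Y2 I g) powr (3/2)
              + supn I g + supn I (Dx I 3 g)"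

definition in_Y :: "real set \<Rightarrow> (real \<Rightarrow> real) \<Rightarrow> bool" where
  "in_Y I g \<longleftrightarrow> bdd_above ((\<lambda>x. \<bar>Y1 I g x\<bar>) ` {x\<in>I. g x \<noteq> 0}) \<and>
                 bdd_above ((\<lambda>x. \<bar>Y2 I g x\<bar>) ` {x\<in>I. g x \<noteq> 0}) \<and>
                 bdd_above ((\<lambda>x. \<bar>g x\<bar>) ` I) \<and> bdd_above ((\<lambda>x. \<bar>Dx I 3 g x\<bar>) ` I)"

definition in_Ct :: "nat \<Rightarrow> real \<Rightarrow> real set \<Rightarrow> (real \<Rightarrow> real) \<Rightarrow> bool" where
  "in_Ct k \<alpha> I g \<longleftrightarrow> in_C k \<alpha> I g \<and> in_Y I g"

definition Ct_norm :: "nat \<Rightarrow> real \<Rightarrow> real set \<Rightarrow> (real \<Rightarrow> real) \<Rightarrow> real" where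
  "Ct_norm k \<alpha> I g = C_norm k \<alpha> I g + Y_norm I g"

definition in_Linf_Ct :: "nat \<Rightarrow> real \<Rightarrow> real set \<Rightarrow> real \<Rightarrow> (real \<Rightarrow> real \<Rightarrow> real) \<Rightarrow> bool" where
  "in_Linf_Ct k \<alpha> I \<delta> f \<longleftrightarrow> (\<forall>t\<in>{0..\<delta>}. in_Ct k \<alpha> I (f t)) \<and>
      bdd_above ((\<lambda>t. Ct_norm k \<alpha> I (f t)) ` {0..\<delta>})"

definition Linf_C_norm :: "nat \<Rightarrow> real \<Rightarrow> real set \<Rightarrow> real \<Rightarrow> (real \<Rightarrow> real \<Rightarrow> real) \<Rightarrow> real" where
  "Linf_C_norm k \<alpha> I \<delta> f = (SUP t\<in>{0..\<delta>}. C_norm k \<alpha> I (f t))"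

(* Hypotheses of the lemma: f in L^infty([0,delta]; C~^{3,alpha}([a,b])) is a (classical,
  pointwise in x) solution of u_t + u u_xxx + alpha1 u_x u_xx + (mu1/m)(u^m)_x = 0,
  with initial datum positive in the interior and vanishing to order >= 3 at a and b. *)
definition is_sol :: "real \<Rightarrow> real \<Rightarrow> nat \<Rightarrow> real \<Rightarrow> real \<Rightarrow> real \<Rightarrow> real \<Rightarrow> (real \<Rightarrow> real \<Rightarrow> real) \<Rightarrow> bool" where
  "is_sol \<alpha>1 \<mu>1 m a b \<alpha> \<delta> f \<longleftrightarrow>
     a < b \<and> 0 < \<alpha> \<and> \<alpha> \<le> 1 \<and> 0 < \<delta> \<and> 2 \<le> m \<and>
     in_Linf_Ct 3 \<alpha> {a..b} \<delta> f \<and>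
     (\<forall>t\<in>{0..\<delta>}. \<forall>x\<in>{a..b}.
        ((\<lambda>s. f s x) has_real_derivative
           - (f t x * Dx {a..b} 3 (f t) x + \<alpha>1 * Dx {a..b} 1 (f t) x * Dx {a..b} 2 (f t) x
              + (\<mu>1 / real m) * Dx {a..b} 1 (\<lambda>y. f t y ^ m) x)) (at t within {0..\<delta>})) \<and>
     (\<forall>x\<in>{a<..<b}. 0 < f 0 x) \<and>
     (\<forall>j<3. Dx {a..b} j (f 0) a = 0 \<and> Dx {a..b} j (f 0) b = 0)"

end

theory Submission
  imports Defs
begin

lemma mvt_within:
  fixes u u' :: "real \<Rightarrow> real"
  assumes d: "\<forall>s\<in>S. (u has_real_derivative u' s) (at s within S)"
    and sub: "{t1..t2} \<subseteq> S" and lt: "t1 < t2"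
  shows "\<exists>\<xi>. t1 < \<xi> \<and> \<xi> < t2 \<and> u t2 - u t1 = u' \<xi> * (t2 - t1)"
proof -
  have "\<exists>x\<in>{t1<..<t2}. u t2 - u t1 = (\<lambda>h. u' x * h) (t2 - t1)"
  proof (rule mvt_simple[OF lt])
    fix x assume "t1 \<le> x" "x \<le> t2"
    then have "(u has_real_derivative u' x) (at x within {t1..t2})"
      using d sub by (meson atLeastAtMost_iff has_field_derivative_subset subsetD)
    then show "(u has_derivative (\<lambda>h. u' x * h)) (at x within {t1..t2})"
      by (simp add: has_field_derivative_def)
  qed
  then show ?thesis by auto
qed

lemma mvt_sym:
  fixes u u' :: "real \<Rightarrow> real"
  assumes d: "\<forall>s\<in>{a..b}. (u has_real_derivative u' s) (at s within {a..b})"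
    and x: "x \<in> {a..b}" and y: "y \<in> {a..b}" and ne: "x \<noteq> y"
  shows "\<exists>\<xi>\<in>{a..b}. \<bar>\<xi> - y\<bar> < \<bar>x - y\<bar> \<and> \<bar>\<xi> - x\<bar> < \<bar>x - y\<bar> \<and> u x - u y = u' \<xi> * (x - y)"
proof (cases "x < y")
  case True
  have "{x..y} \<subseteq> {a..b}" using x y by auto
  from mvt_within[OF d this True] obtain \<xi> where "x < \<xi>" "\<xi> < y" "u y - u x = u' \<xi> * (y - x)" by blast
  then show ?thesis using x y
    by (rule_tac x=\<xi> in bexI) (auto simp: algebra_simps)
next
  case False
  then have lt: "y < x" using ne by auto
  have "{y..x} \<subseteq> {a..b}" using x y by auto
  from mvt_within[OF d this lt] obtain \<xi> where "y < \<xi>" "\<xi> < x" "u x - u y = u' \<xi> * (x - y)" by blast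
  then show ?thesis using x y
    by (rule_tac x=\<xi> in bexI) (auto simp: algebra_simps)
qed

lemma deriv_bound0:
  fixes u u' :: "real \<Rightarrow> real"
  assumes d: "\<forall>s\<in>{a..b}. (u has_real_derivative u' s) (at s within {a..b})"
    and x: "x \<in> {a..b}" and p: "p \<in> {a..b}" and u0: "u p = 0"
    and B: "\<And>y. y \<in> {a..b} \<Longrightarrow> \<bar>y - p\<bar> < \<bar>x - p\<bar> \<Longrightarrow> \<bar>u' y\<bar> \<le> B"
  shows "\<bar>u x\<bar> \<le> B * \<bar>x - p\<bar>"
proof (cases "x = p")
  case True then show ?thesis using u0 by simp
next
  case False
  from mvt_sym[OF d x p False] obtain \<xi> where "\<xi> \<in> {a..b}" "\<bar>\<xi> - p\<bar> < \<bar>x - p\<bar>" "u x - u p = u' \<xi> * (x - p)"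
    by blast
  then show ?thesis using B[of \<xi>] u0 by (simp add: abs_mult mult_right_mono)
qed

lemma deriv_bound_powr:
  fixes u u' :: "real \<Rightarrow> real"
  assumes d: "\<forall>s\<in>{a..b}. (u has_real_derivative u' s) (at s within {a..b})"
    and x: "x \<in> {a..b}" and p: "p \<in> {a..b}" and u0: "u p = 0"
    and r: "r \<ge> 0" and H: "H \<ge> 0"
    and B: "\<And>y. y \<in> {a..b} \<Longrightarrow> \<bar>u' y\<bar> \<le> H * \<bar>y - p\<bar> powr r"
  shows "\<bar>u x\<bar> \<le> H * \<bar>x - p\<bar> powr (r + 1)"
proof -
  have "\<bar>u x\<bar> \<le> (H * \<bar>x - p\<bar> powr r) * \<bar>x - p\<bar>"
  proof (rule deriv_bound0[OF d x p u0])
    fix y assume "y \<in> {a..b}" "\<bar>y - p\<bar> < \<bar>x - p\<bar>"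
    then show "\<bar>u' y\<bar> \<le> H * \<bar>x - p\<bar> powr r"
      using B[of y] by (smt (verit) H abs_ge_zero mult_left_mono powr_mono2 r)
  qed
  also have "\<dots> = H * \<bar>x - p\<bar> powr (r + 1)"
    by (cases "x = p") (auto simp: powr_add)
  finally show ?thesis .
qed


lemma taylor3:
  fixes g0 g1 g2 g3 :: "real \<Rightarrow> real"
  assumes d0: "\<forall>s\<in>{a..b}. (g0 has_real_derivative g1 s) (at s within {a..b})"
    and d1: "\<forall>s\<in>{a..b}. (g1 has_real_derivative g2 s) (at s within {a..b})"
    and d2: "\<forall>s\<in>{a..b}. (g2 has_real_derivative g3 s) (at s within {a..b})"
    and p: "p \<in> {a..b}" and z0: "g0 p = 0" and z1: "g1 p = 0" and z2: "g2 p = 0"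
    and H: "H \<ge> 0" and al: "\<alpha> \<ge> 0"
    and hol: "\<And>y. y \<in> {a..b} \<Longrightarrow> \<bar>g3 y - g3 p\<bar> \<le> H * \<bar>y - p\<bar> powr \<alpha>"
    and x: "x \<in> {a..b}"
  shows "\<bar>g2 x - g3 p * (x - p)\<bar> \<le> H * \<bar>x - p\<bar> powr (\<alpha> + 1)"
    "\<bar>g1 x - g3 p * (x - p)^2 / 2\<bar> \<le> H * \<bar>x - p\<bar> powr (\<alpha> + 1 + 1)"
    "\<bar>g0 x - g3 p * (x - p)^3 / 6\<bar> \<le> H * \<bar>x - p\<bar> powr (\<alpha> + 1 + 1 + 1)"
proof -
  let ?c = "g3 p"
  have e2: "\<bar>g2 y - ?c * (y - p)\<bar> \<le> H * \<bar>y - p\<bar> powr (\<alpha> + 1)" if y: "y \<in> {a..b}" for y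
  proof (rule deriv_bound_powr[where u'="\<lambda>s. g3 s - ?c", OF _ y p _ al H])
    show "\<forall>s\<in>{a..b}. ((\<lambda>y. g2 y - ?c * (y - p)) has_real_derivative g3 s - ?c) (at s within {a..b})"
      using d2 by (auto intro!: derivative_eq_intros)
  qed (use z2 hol in auto)
  have e1: "\<bar>g1 y - ?c * (y - p)^2 / 2\<bar> \<le> H * \<bar>y - p\<bar> powr (\<alpha> + 1 + 1)" if y: "y \<in> {a..b}" for y
  proof (rule deriv_bound_powr[where u'="\<lambda>s. g2 s - ?c * (s - p)", OF _ y p _ _ H])
    show "\<forall>s\<in>{a..b}. ((\<lambda>y. g1 y - ?c * (y - p)^2 / 2) has_real_derivative g2 s - ?c * (s - p)) (at s within {a..b})"
      using d1 by (auto intro!: derivative_eq_intros simp: power2_eq_square field_simps)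
  qed (use z1 e2 al in auto)
  have e0: "\<bar>g0 y - ?c * (y - p)^3 / 6\<bar> \<le> H * \<bar>y - p\<bar> powr (\<alpha> + 1 + 1 + 1)" if y: "y \<in> {a..b}" for y
  proof (rule deriv_bound_powr[where u'="\<lambda>s. g1 s - ?c * (s - p)^2 / 2", OF _ y p _ _ H])
    show "\<forall>s\<in>{a..b}. ((\<lambda>y. g0 y - ?c * (y - p)^3 / 6) has_real_derivative g1 s - ?c * (s - p)^2 / 2) (at s within {a..b})"
      using d0 by (auto intro!: derivative_eq_intros)
  qed (use z0 e1 al in auto)
  show "\<bar>g2 x - g3 p * (x - p)\<bar> \<le> H * \<bar>x - p\<bar> powr (\<alpha> + 1)" using e2 x .
  show "\<bar>g1 x - g3 p * (x - p)^2 / 2\<bar> \<le> H * \<bar>x - p\<bar> powr (\<alpha> + 1 + 1)" using e1 x .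
  show "\<bar>g0 x - g3 p * (x - p)^3 / 6\<bar> \<le> H * \<bar>x - p\<bar> powr (\<alpha> + 1 + 1 + 1)" using e0 x .
qed

lemma simple_bounds:
  fixes g0 g1 g2 g3 :: "real \<Rightarrow> real"
  assumes d0: "\<forall>s\<in>{a..b}. (g0 has_real_derivative g1 s) (at s within {a..b})"
    and d1: "\<forall>s\<in>{a..b}. (g1 has_real_derivative g2 s) (at s within {a..b})"
    and d2: "\<forall>s\<in>{a..b}. (g2 has_real_derivative g3 s) (at s within {a..b})"
    and p: "p \<in> {a..b}" and z0: "g0 p = 0" and z1: "g1 p = 0" and z2: "g2 p = 0"
    and N: "\<And>y. y \<in> {a..b} \<Longrightarrow> \<bar>g3 y\<bar> \<le> N"
    and x: "x \<in> {a..b}"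
  shows "\<bar>g2 x\<bar> \<le> N * \<bar>x - p\<bar>" "\<bar>g1 x\<bar> \<le> N * \<bar>x - p\<bar>^2" "\<bar>g0 x\<bar> \<le> N * \<bar>x - p\<bar>^3"
proof -
  have N0: "N \<ge> 0" using N[OF p] by simp
  have e2: "\<bar>g2 y\<bar> \<le> N * \<bar>y - p\<bar>" if y: "y \<in> {a..b}" for y
    by (rule deriv_bound0[OF d2 y p z2]) (use N in auto)
  have e1: "\<bar>g1 y\<bar> \<le> N * \<bar>y - p\<bar>^2" if y: "y \<in> {a..b}" for y
  proof -
    have "\<bar>g1 y\<bar> \<le> (N * \<bar>y - p\<bar>) * \<bar>y - p\<bar>"
    proof (rule deriv_bound0[OF d1 y p z1])
      fix z assume "z \<in> {a..b}" "\<bar>z - p\<bar> < \<bar>y - p\<bar>"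
      then show "\<bar>g2 z\<bar> \<le> N * \<bar>y - p\<bar>" using e2[of z] N0
        by (smt (verit) mult_left_mono)
    qed
    then show ?thesis by (simp add: power2_eq_square mult.assoc)
  qed
  have e0: "\<bar>g0 y\<bar> \<le> N * \<bar>y - p\<bar>^3" if y: "y \<in> {a..b}" for y
  proof -
    have "\<bar>g0 y\<bar> \<le> (N * \<bar>y - p\<bar>^2) * \<bar>y - p\<bar>"
    proof (rule deriv_bound0[OF d0 y p z0])
      fix z assume "z \<in> {a..b}" "\<bar>z - p\<bar> < \<bar>y - p\<bar>"
      then show "\<bar>g1 z\<bar> \<le> N * \<bar>y - p\<bar>^2" using e1[of z] N0
        by (smt (verit) abs_ge_zero mult_left_mono power_mono)
    qed
    then show ?thesis by (simp add: power3_eq_cube power2_eq_square mult.assoc)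
  qed
  show "\<bar>g2 x\<bar> \<le> N * \<bar>x - p\<bar>" "\<bar>g1 x\<bar> \<le> N * \<bar>x - p\<bar>^2" "\<bar>g0 x\<bar> \<le> N * \<bar>x - p\<bar>^3"
    using e0 e1 e2 x by auto
qed


lemma gronwall0:
  fixes u u' :: "real \<Rightarrow> real"
  assumes d: "\<forall>s\<in>{0..\<delta>}. (u has_real_derivative u' s) (at s within {0..\<delta>})"
    and K: "\<forall>s\<in>{0..\<delta>}. \<bar>u' s\<bar> \<le> K * \<bar>u s\<bar>"
    and t0: "t0 \<in> {0..\<delta>}" and u0: "u t0 = 0" and t: "t \<in> {0..\<delta>}"
  shows "u t = 0"
proof -
  define L where "L = \<bar>K\<bar>"
  have L0: "L \<ge> 0" by (simp add: L_def)
  have KL: "\<bar>u' s\<bar> \<le> L * \<bar>u s\<bar>" if "s \<in> {0..\<delta>}" for s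
    using K that unfolding L_def by (smt (verit) abs_ge_zero mult_right_mono)
  have uu: "\<bar>u s * u' s\<bar> \<le> L * (u s)^2" if "s \<in> {0..\<delta>}" for s
  proof -
    have "\<bar>u s * u' s\<bar> = \<bar>u s\<bar> * \<bar>u' s\<bar>" by (simp add: abs_mult)
    also have "\<dots> \<le> \<bar>u s\<bar> * (L * \<bar>u s\<bar>)" using KL[OF that] by (simp add: mult_left_mono)
    also have "\<dots> = L * (u s)^2" by (simp add: power2_eq_square abs_mult_self_eq algebra_simps)
    finally show ?thesis .
  qed
  show ?thesis
  proof (cases "t0 \<le> t")
    case True
    show ?thesis
    proof (cases "t0 = t")
      case True then show ?thesis using u0 by simp
    next
      case False
      with True have lt: "t0 < t" by simp
      define v where "v s = (u s)^2 * exp (- 2 * L * s)" for s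
      define v' where "v' s = 2 * u s * u' s * exp (- 2 * L * s) - 2 * L * (u s)^2 * exp (- 2 * L * s)" for s
      have dv: "\<forall>s\<in>{0..\<delta>}. (v has_real_derivative v' s) (at s within {0..\<delta>})"
        using d unfolding v_def v'_def by (auto intro!: derivative_eq_intros simp: algebra_simps)
      have "{t0..t} \<subseteq> {0..\<delta>}" using t0 t by auto
      from mvt_within[OF dv this lt] obtain \<xi> where xi: "t0 < \<xi>" "\<xi> < t" "v t - v t0 = v' \<xi> * (t - t0)"
        by blast
      have xiS: "\<xi> \<in> {0..\<delta>}" using xi t0 t by auto
      have "v' \<xi> = 2 * exp (- 2 * L * \<xi>) * (u \<xi> * u' \<xi> - L * (u \<xi>)^2)"
        unfolding v'_def by (simp add: algebra_simps)
      also have "\<dots> \<le> 0" using uu[OF xiS]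
        by (intro mult_nonneg_nonpos) auto
      finally have "v' \<xi> * (t - t0) \<le> 0" using xi by (intro mult_nonpos_nonneg) auto
      then have "v t \<le> 0" using xi u0 unfolding v_def by simp
      then have "(u t)^2 \<le> 0" unfolding v_def by (simp add: mult_le_0_iff)
      then show ?thesis by simp
    qed
  next
    case False
    then have lt: "t < t0" by simp
    define v where "v s = (u s)^2 * exp (2 * L * s)" for s
    define v' where "v' s = 2 * u s * u' s * exp (2 * L * s) + 2 * L * (u s)^2 * exp (2 * L * s)" for s
    have dv: "\<forall>s\<in>{0..\<delta>}. (v has_real_derivative v' s) (at s within {0..\<delta>})"
      using d unfolding v_def v'_def by (auto intro!: derivative_eq_intros simp: algebra_simps)
    have "{t..t0} \<subseteq> {0..\<delta>}" using t0 t by auto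
    from mvt_within[OF dv this lt] obtain \<xi> where xi: "t < \<xi>" "\<xi> < t0" "v t0 - v t = v' \<xi> * (t0 - t)"
      by blast
    have xiS: "\<xi> \<in> {0..\<delta>}" using xi t0 t by auto
    have "v' \<xi> = 2 * exp (2 * L * \<xi>) * (u \<xi> * u' \<xi> + L * (u \<xi>)^2)"
      unfolding v'_def by (simp add: algebra_simps)
    also have "\<dots> \<ge> 0" using uu[OF xiS]
      by (intro mult_nonneg_nonneg) auto
    finally have "v' \<xi> * (t0 - t) \<ge> 0" using xi by (intro mult_nonneg_nonneg) auto
    then have "v t \<le> 0" using xi u0 unfolding v_def by simp
    then have "(u t)^2 \<le> 0" unfolding v_def by (simp add: mult_le_0_iff)
    then show ?thesis by simp
  qed
qed

lemma zero_by_limit: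
  fixes g u :: "real \<Rightarrow> real"
  assumes F: "F \<noteq> bot" and g: "(g \<longlongrightarrow> c) F" and u: "(u \<longlongrightarrow> 0) F"
    and r: "r > 0"
    and ev: "\<forall>\<^sub>F y in F. \<bar>g y\<bar> \<le> N * \<bar>u y\<bar> powr r"
  shows "c = 0"
proof -
  have "((\<lambda>y. N * \<bar>u y\<bar> powr r) \<longlongrightarrow> N * 0) F"
    by (intro tendsto_intros tendsto_zero_powrI[where b=r]) (use u r tendsto_rabs_zero in auto)
  moreover have "((\<lambda>y. \<bar>g y\<bar>) \<longlongrightarrow> \<bar>c\<bar>) F" using g by (intro tendsto_intros)
  ultimately have "\<bar>c\<bar> \<le> N * 0" using tendsto_le[OF F] ev by blast
  then show ?thesis by simp
qed

lemma witness:
  fixes p a b C \<alpha> \<epsilon> :: real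
  assumes ab: "a < b" and p: "p \<in> {a..b}" and al: "\<alpha> > 0" and e: "\<epsilon> > 0"
  shows "\<exists>x\<in>{a..b}. x \<noteq> p \<and> C * \<bar>x - p\<bar> powr \<alpha> < \<epsilon>"
proof -
  have F: "at p within {a..b} \<noteq> bot" using ab p by (simp add: trivial_limit_within)
  have "((\<lambda>x. x - p) \<longlongrightarrow> 0) (at p within {a..b})"
    using tendsto_diff[OF tendsto_ident_at[of p "{a..b}"] tendsto_const[of p]] by simp
  then have "((\<lambda>x. C * \<bar>x - p\<bar> powr \<alpha>) \<longlongrightarrow> C * 0) (at p within {a..b})"
    by (intro tendsto_intros tendsto_zero_powrI[where b=\<alpha>])
       (auto simp: al intro!: tendsto_rabs_zero)
  then have "\<forall>\<^sub>F x in at p within {a..b}. C * \<bar>x - p\<bar> powr \<alpha> < \<epsilon>"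
    using e by (simp add: order_tendstoD(2))
  moreover have "\<forall>\<^sub>F x in at p within {a..b}. x \<in> {a..b} \<and> x \<noteq> p"
    by (auto simp: eventually_at_filter)
  ultimately have "\<forall>\<^sub>F x in at p within {a..b}. x \<in> {a..b} \<and> x \<noteq> p \<and> C * \<bar>x - p\<bar> powr \<alpha> < \<epsilon>"
    by eventually_elim auto
  from eventually_happens[OF this] F show ?thesis by auto
qed


lemma supn_upper:
  assumes "bdd_above ((\<lambda>x. \<bar>h x\<bar>) ` S)" "x \<in> S"
  shows "\<bar>h x\<bar> \<le> supn S h"
  unfolding supn_def using assms by (intro cSup_upper) auto

lemma supn_nonneg:
  assumes "bdd_above ((\<lambda>x. \<bar>h x\<bar>) ` S)"
  shows "0 \<le> supn S h"
  unfolding supn_def using assms by (intro cSup_upper) auto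

lemma holder_semi_nonneg:
  assumes "bdd_above (holder_set \<alpha> I h)"
  shows "0 \<le> holder_semi \<alpha> I h"
  unfolding holder_semi_def using assms by (intro cSup_upper) auto

lemma holder_bound:
  assumes bd: "bdd_above (holder_set \<alpha> I h)" and x: "x \<in> I" and y: "y \<in> I"
  shows "\<bar>h x - h y\<bar> \<le> holder_semi \<alpha> I h * \<bar>x - y\<bar> powr \<alpha>"
proof (cases "x = y")
  case True then show ?thesis by simp
next
  case False
  have mem: "\<bar>h x - h y\<bar> / \<bar>x - y\<bar> powr \<alpha> \<in> holder_set \<alpha> I h"
    unfolding holder_set_def using x y False by blast
  have "\<bar>h x - h y\<bar> / \<bar>x - y\<bar> powr \<alpha> \<le> holder_semi \<alpha> I h"
    unfolding holder_semi_def using bd mem by (intro cSup_upper) auto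
  moreover have "\<bar>x - y\<bar> powr \<alpha> > 0" using False by simp
  ultimately show ?thesis by (simp add: divide_le_eq)
qed

lemma ct_bounds:
  assumes ct: "in_Ct 3 \<alpha> I g" and M: "Ct_norm 3 \<alpha> I g \<le> M"
  shows "\<And>j x. j \<le> 3 \<Longrightarrow> x \<in> I \<Longrightarrow> \<bar>Dx I j g x\<bar> \<le> max 1 M"
    and "bdd_above (holder_set \<alpha> I (Dx I 3 g))"
    and "0 \<le> holder_semi \<alpha> I (Dx I 3 g)"
    and "holder_semi \<alpha> I (Dx I 3 g) \<le> C_norm 3 \<alpha> I g"
    and "C_norm 3 \<alpha> I g \<le> M"
    and "holder_semi \<alpha> I (Dx I 3 g) \<le> max 1 M"
    and "\<And>x. x \<in> I \<Longrightarrow> g x \<noteq> 0 \<Longrightarrow> \<bar>Dx I 1 g x\<bar> \<le> max 1 M * \<bar>g x\<bar> powr (2/3)"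
    and "\<And>x. x \<in> I \<Longrightarrow> g x \<noteq> 0 \<Longrightarrow> \<bar>Dx I 2 g x\<bar> \<le> max 1 M * \<bar>g x\<bar> powr (1/3)"
proof -
  from ct have inC: "in_C 3 \<alpha> I g" and inY: "in_Y I g" by (auto simp: in_Ct_def)
  have bdj: "\<And>j. j \<le> 3 \<Longrightarrow> bdd_above ((\<lambda>x. \<bar>Dx I j g x\<bar>) ` I)"
    using inC by (auto simp: in_C_def)
  show bdh: "bdd_above (holder_set \<alpha> I (Dx I 3 g))" using inC by (auto simp: in_C_def)
  show h0: "0 \<le> holder_semi \<alpha> I (Dx I 3 g)" by (rule holder_semi_nonneg[OF bdh])
  let ?S = "{x\<in>I. g x \<noteq> 0}"
  have bd1: "bdd_above ((\<lambda>x. \<bar>Y1 I g x\<bar>) ` ?S)" and bd2: "bdd_above ((\<lambda>x. \<bar>Y2 I g x\<bar>) ` ?S)"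
    and bdg: "bdd_above ((\<lambda>x. \<bar>g x\<bar>) ` I)" and bd3: "bdd_above ((\<lambda>x. \<bar>Dx I 3 g x\<bar>) ` I)"
    using inY by (auto simp: in_Y_def)
  define s1 where "s1 = supn ?S (Y1 I g)"
  define s2 where "s2 = supn ?S (Y2 I g)"
  have s1: "0 \<le> s1" unfolding s1_def by (rule supn_nonneg[OF bd1])
  have s2: "0 \<le> s2" unfolding s2_def by (rule supn_nonneg[OF bd2])
  have sj: "0 \<le> supn I (Dx I j g)" if "j \<le> 3" for j using supn_nonneg[OF bdj[OF that]] .
  have Y0: "0 \<le> Y_norm I g"
    unfolding Y_norm_def s1_def[symmetric] s2_def[symmetric]
    using s1 s2 supn_nonneg[OF bdg] supn_nonneg[OF bd3] by simp
  have sum0: "0 \<le> (\<Sum>j\<le>3. supn I (Dx I j g))" by (intro sum_nonneg) (use sj in auto)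
  have C0: "0 \<le> C_norm 3 \<alpha> I g" unfolding C_norm_def using sum0 h0 by simp
  show CM: "C_norm 3 \<alpha> I g \<le> M" using M Y0 unfolding Ct_norm_def by simp
  show "holder_semi \<alpha> I (Dx I 3 g) \<le> C_norm 3 \<alpha> I g" unfolding C_norm_def using sum0 by simp
  then show "holder_semi \<alpha> I (Dx I 3 g) \<le> max 1 M" using CM by simp
  show "\<bar>Dx I j g x\<bar> \<le> max 1 M" if "j \<le> 3" "x \<in> I" for j x
  proof -
    have "\<bar>Dx I j g x\<bar> \<le> supn I (Dx I j g)" by (rule supn_upper[OF bdj[OF that(1)] that(2)])
    also have "\<dots> \<le> (\<Sum>j\<le>3. supn I (Dx I j g))"
      by (rule member_le_sum) (use that sj in auto)
    also have "\<dots> \<le> C_norm 3 \<alpha> I g" unfolding C_norm_def using h0 by simp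
    finally show ?thesis using CM by simp
  qed
  have YM: "Y_norm I g \<le> M" using M C0 unfolding Ct_norm_def by simp
  have s1M: "s1 \<le> max 1 M"
  proof (cases "s1 \<le> 1")
    case False
    then have "s1 \<le> s1 ^ 3" by (simp add: power3_eq_cube) (metis less_eq_real_def mult_le_cancel_left1 one_le_power power2_eq_square not_le)
    moreover have "s1 ^ 3 \<le> Y_norm I g"
      unfolding Y_norm_def s1_def[symmetric] s2_def[symmetric]
      using s2 supn_nonneg[OF bdg] supn_nonneg[OF bd3] by simp
    ultimately show ?thesis using YM by simp
  qed simp
  have s2M: "s2 \<le> max 1 M"
  proof (cases "s2 \<le> 1")
    case False
    then have "s2 powr 1 \<le> s2 powr (3/2)" by (intro powr_mono) auto
    then have "s2 \<le> s2 powr (3/2)" using False by simp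
    moreover have "s2 powr (3/2) \<le> Y_norm I g"
      unfolding Y_norm_def s1_def[symmetric] s2_def[symmetric]
      using s1 supn_nonneg[OF bdg] supn_nonneg[OF bd3] by simp
    ultimately show ?thesis using YM by simp
  qed simp
  show "\<bar>Dx I 1 g x\<bar> \<le> max 1 M * \<bar>g x\<bar> powr (2/3)" if x: "x \<in> I" "g x \<noteq> 0" for x
  proof -
    have xS: "x \<in> ?S" using x by simp
    have "\<bar>Y1 I g x\<bar> \<le> s1" unfolding s1_def by (rule supn_upper[OF bd1 xS])
    moreover have "Dx I 1 g x = \<bar>g x\<bar> powr (2/3) * Y1 I g x"
      using x(2) unfolding Y1_def by (simp add: powr_minus field_simps)
    ultimately show ?thesis using s1M
      by (simp add: abs_mult) (metis abs_ge_zero mult.commute mult_mono powr_ge_zero order_trans le_max_iff_disj s1 mult_left_mono)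
  qed
  show "\<bar>Dx I 2 g x\<bar> \<le> max 1 M * \<bar>g x\<bar> powr (1/3)" if x: "x \<in> I" "g x \<noteq> 0" for x
  proof -
    have xS: "x \<in> ?S" using x by simp
    have "\<bar>Y2 I g x\<bar> \<le> s2" unfolding s2_def by (rule supn_upper[OF bd2 xS])
    moreover have "Dx I 2 g x = \<bar>g x\<bar> powr (1/3) * Y2 I g x"
      using x(2) unfolding Y2_def by (simp add: powr_minus field_simps)
    ultimately show ?thesis using s2M
      by (simp add: abs_mult) (metis abs_ge_zero mult.commute mult_mono powr_ge_zero order_trans le_max_iff_disj s2 mult_left_mono)
  qed
qed


lemma expand_est:
  fixes H y u d1 d2 d3 N P0 P1 P2 P3 :: real
  assumes hu: "\<bar>u - H*y^3/6\<bar> \<le> N*P0" and h1: "\<bar>d1 - H*y^2/2\<bar> \<le> N*P1"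
    and h2: "\<bar>d2 - H*y\<bar> \<le> N*P2" and h3: "\<bar>d3 - H\<bar> \<le> N*P3"
    and r3: "\<bar>y\<bar>^3 * P3 = P0" and r2: "y^2 * P2 = P0" and r1: "P1 * \<bar>y\<bar> = P0"
    and H: "\<bar>H\<bar> \<le> N" and d3: "\<bar>d3\<bar> \<le> N" and d2: "\<bar>d2\<bar> \<le> N*\<bar>y\<bar>" and N: "N \<ge> 0"
    and P: "P0 \<ge> 0" "P1 \<ge> 0" "P2 \<ge> 0" "P3 \<ge> 0"
  shows "\<bar>u*d3 - H^2*y^3/6\<bar> \<le> 2*N^2*P0" "\<bar>d1*d2 - H^2*y^3/2\<bar> \<le> 2*N^2*P0"
proof -
  have "u*d3 - H^2*y^3/6 = (H*y^3/6)*(d3 - H) + (u - H*y^3/6)*d3" by (simp add: field_simps power2_eq_square)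
  moreover have "\<bar>(H*y^3/6)*(d3 - H)\<bar> \<le> (N*\<bar>y\<bar>^3/6)*(N*P3)"
    unfolding abs_mult by (intro mult_mono) (use H h3 N in \<open>auto simp: abs_mult power_abs intro!: mult_right_mono\<close>)
  moreover have "\<bar>(u - H*y^3/6)*d3\<bar> \<le> (N*P0)*N"
    unfolding abs_mult by (intro mult_mono) (use hu d3 N P in auto)
  moreover have "(N*\<bar>y\<bar>^3/6)*(N*P3) = N^2*P0/6" using r3 by (simp add: power2_eq_square algebra_simps)
  moreover have "(N*P0)*N = N^2*P0" by (simp add: power2_eq_square)
  moreover have "N^2*P0 \<ge> 0" using P N by simp
  moreover have "\<bar>(H*y^3/6)*(d3 - H) + (u - H*y^3/6)*d3\<bar> \<le> \<bar>(H*y^3/6)*(d3 - H)\<bar> + \<bar>(u - H*y^3/6)*d3\<bar>"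
    by (rule abs_triangle_ineq)
  ultimately show "\<bar>u*d3 - H^2*y^3/6\<bar> \<le> 2*N^2*P0" by linarith
  have "d1*d2 - H^2*y^3/2 = (H*y^2/2)*(d2 - H*y) + (d1 - H*y^2/2)*d2" by (simp add: field_simps power2_eq_square power3_eq_cube)
  moreover have "\<bar>(H*y^2/2)*(d2 - H*y)\<bar> \<le> (N*y^2/2)*(N*P2)"
    unfolding abs_mult by (intro mult_mono) (use H h2 N in \<open>auto simp: abs_mult intro!: mult_right_mono\<close>)
  moreover have "\<bar>(d1 - H*y^2/2)*d2\<bar> \<le> (N*P1)*(N*\<bar>y\<bar>)"
    unfolding abs_mult by (intro mult_mono) (use h1 d2 N P in auto)
  moreover have "(N*y^2/2)*(N*P2) = N^2*P0/2" using r2 by (simp add: power2_eq_square algebra_simps)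
  moreover have "(N*P1)*(N*\<bar>y\<bar>) = N^2*P0" using r1 by (simp add: power2_eq_square algebra_simps)
  moreover have "N^2*P0 \<ge> 0" using P N by simp
  moreover have "\<bar>(H*y^2/2)*(d2 - H*y) + (d1 - H*y^2/2)*d2\<bar> \<le> \<bar>(H*y^2/2)*(d2 - H*y)\<bar> + \<bar>(d1 - H*y^2/2)*d2\<bar>"
    by (rule abs_triangle_ineq)
  ultimately show "\<bar>d1*d2 - H^2*y^3/2\<bar> \<le> 2*N^2*P0" by linarith
qed

lemma quot_est:
  fixes hs ht hx fs ft Fx Y ds c N K R :: real
  assumes Y: "Y \<noteq> 0" and ds: "ds \<noteq> 0"
    and es: "\<bar>fs - hs*Y/6\<bar> \<le> N*(\<bar>Y\<bar>*R)" and et: "\<bar>ft - ht*Y/6\<bar> \<le> N*(\<bar>Y\<bar>*R)"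
    and mv: "fs - ft = Fx*ds" and G: "\<bar>Fx + c*hx^2*Y/6\<bar> \<le> K*(\<bar>Y\<bar>*R)"
  shows "\<bar>(hs - ht)/ds - (-c*ht^2)\<bar> \<le> \<bar>c*hx^2 - c*ht^2\<bar> + 6*K*R + 12*N*R/\<bar>ds\<bar>"
proof -
  define E0s where "E0s = fs - hs*Y/6"
  define E0t where "E0t = ft - ht*Y/6"
  define GG where "GG = Fx + c*hx^2*Y/6"
  have eq: "(hs - ht)/ds - (-c*ht^2) = (c*ht^2 - c*hx^2) + 6*GG/Y + 6*(E0t - E0s)/(Y*ds)"
  proof -
    have "fs = Fx*ds + ft" using mv by simp
    then show ?thesis unfolding E0s_def E0t_def GG_def using Y ds
      by (simp add: field_simps)
  qed
  have b1: "\<bar>6*GG/Y\<bar> \<le> 6*K*R"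
  proof -
    have "\<bar>6*GG/Y\<bar> = 6*\<bar>GG\<bar>/\<bar>Y\<bar>" by (simp add: abs_mult)
    also have "\<dots> \<le> 6*(K*(\<bar>Y\<bar>*R))/\<bar>Y\<bar>" using G unfolding GG_def by (intro divide_right_mono) auto
    also have "\<dots> = 6*K*R" using Y by simp
    finally show ?thesis .
  qed
  have b2: "\<bar>6*(E0t - E0s)/(Y*ds)\<bar> \<le> 12*N*R/\<bar>ds\<bar>"
  proof -
    have "\<bar>6*(E0t - E0s)/(Y*ds)\<bar> = 6*\<bar>E0t - E0s\<bar>/(\<bar>Y\<bar>*\<bar>ds\<bar>)" unfolding abs_divide abs_mult by simp
    also have "\<dots> \<le> 6*(2*(N*(\<bar>Y\<bar>*R)))/(\<bar>Y\<bar>*\<bar>ds\<bar>)"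
    proof (intro divide_right_mono mult_left_mono)
      have "\<bar>E0t - E0s\<bar> \<le> \<bar>E0t\<bar> + \<bar>E0s\<bar>" by (rule abs_triangle_ineq4)
      then show "\<bar>E0t - E0s\<bar> \<le> 2*(N*(\<bar>Y\<bar>*R))" using es et unfolding E0s_def E0t_def by linarith
    qed auto
    also have "\<dots> = 12*N*R/\<bar>ds\<bar>" using Y by simp
    finally show ?thesis .
  qed
  have "\<bar>(c*ht^2 - c*hx^2) + 6*GG/Y + 6*(E0t - E0s)/(Y*ds)\<bar> \<le> \<bar>c*ht^2 - c*hx^2\<bar> + \<bar>6*GG/Y\<bar> + \<bar>6*(E0t - E0s)/(Y*ds)\<bar>"
    using abs_triangle_ineq[of "(c*ht^2 - c*hx^2) + 6*GG/Y" "6*(E0t - E0s)/(Y*ds)"]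
      abs_triangle_ineq[of "c*ht^2 - c*hx^2" "6*GG/Y"] by linarith
  moreover have "\<bar>c*ht^2 - c*hx^2\<bar> = \<bar>c*hx^2 - c*ht^2\<bar>" by (rule abs_minus_commute)
  ultimately show ?thesis unfolding eq using b1 b2 by linarith
qed

lemma ode_unique:
  fixes h1 h2 :: "real \<Rightarrow> real"
  assumes d0: "0 \<le> \<delta>"
    and d1: "\<forall>t\<in>{0..\<delta>}. (h1 has_real_derivative - c * (h1 t)^2) (at t within {0..\<delta>})"
    and d2: "\<forall>t\<in>{0..\<delta>}. (h2 has_real_derivative - c * (h2 t)^2) (at t within {0..\<delta>})"
    and i: "h1 0 = h2 0" and t: "t \<in> {0..\<delta>}"
  shows "h1 t = h2 t"
proof -
  have c1: "continuous_on {0..\<delta>} h1" using d1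
    by (auto simp: continuous_on_eq_continuous_within intro!: DERIV_continuous)
  have c2: "continuous_on {0..\<delta>} h2" using d2
    by (auto simp: continuous_on_eq_continuous_within intro!: DERIV_continuous)
  obtain B1 where B1: "\<And>t. t \<in> {0..\<delta>} \<Longrightarrow> \<bar>h1 t\<bar> \<le> B1"
    using continuous_on_compact_bound[OF compact_Icc c1] by auto
  obtain B2 where B2: "\<And>t. t \<in> {0..\<delta>} \<Longrightarrow> \<bar>h2 t\<bar> \<le> B2"
    using continuous_on_compact_bound[OF compact_Icc c2] by auto
  have "(\<lambda>s. h1 s - h2 s) t = 0"
  proof (rule gronwall0[where u'="\<lambda>s. - c * (h1 s)^2 - (- c * (h2 s)^2)" and K="\<bar>c\<bar> * (B1 + B2)", OF _ _ _ _ t])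
    show "\<forall>s\<in>{0..\<delta>}. ((\<lambda>s. h1 s - h2 s) has_real_derivative - c * (h1 s)^2 - (- c * (h2 s)^2)) (at s within {0..\<delta>})"
      using d1 d2 by (auto intro!: derivative_eq_intros)
    show "\<forall>s\<in>{0..\<delta>}. \<bar>- c * (h1 s)^2 - (- c * (h2 s)^2)\<bar> \<le> \<bar>c\<bar> * (B1 + B2) * \<bar>h1 s - h2 s\<bar>"
    proof
      fix s assume s: "s \<in> {0..\<delta>}"
      have "- c * (h1 s)^2 - (- c * (h2 s)^2) = - c * (h1 s + h2 s) * (h1 s - h2 s)"
        by (simp add: algebra_simps power2_eq_square)
      then have "\<bar>- c * (h1 s)^2 - (- c * (h2 s)^2)\<bar> = \<bar>c\<bar> * \<bar>h1 s + h2 s\<bar> * \<bar>h1 s - h2 s\<bar>"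
        by (simp add: abs_mult)
      also have "\<dots> \<le> \<bar>c\<bar> * (B1 + B2) * \<bar>h1 s - h2 s\<bar>"
        using B1[OF s] B2[OF s] by (intro mult_right_mono mult_left_mono) auto
      finally show "\<bar>- c * (h1 s)^2 - (- c * (h2 s)^2)\<bar> \<le> \<bar>c\<bar> * (B1 + B2) * \<bar>h1 s - h2 s\<bar>" .
    qed
    show "0 \<in> {0..\<delta>}" using d0 by simp
    show "h1 0 - h2 0 = 0" using i by simp
  qed
  then show ?thesis by simp
qed


lemma powr_rels:
  fixes y \<alpha> :: real
  shows "\<bar>y\<bar>^3 * \<bar>y\<bar> powr \<alpha> = \<bar>y\<bar> powr (\<alpha>+1+1+1)"
    "y^2 * \<bar>y\<bar> powr (\<alpha>+1) = \<bar>y\<bar> powr (\<alpha>+1+1+1)"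
    "\<bar>y\<bar> powr (\<alpha>+1+1) * \<bar>y\<bar> = \<bar>y\<bar> powr (\<alpha>+1+1+1)"
    "\<bar>y^3\<bar> * \<bar>y\<bar> powr \<alpha> = \<bar>y\<bar> powr (\<alpha>+1+1+1)"
proof -
  have e3: "\<bar>y\<bar> powr (\<alpha>+1+1+1) = \<bar>y\<bar> powr \<alpha> * \<bar>y\<bar> * \<bar>y\<bar> * \<bar>y\<bar>"
    by (simp only: powr_add powr_one abs_ge_zero)
  show 1: "\<bar>y\<bar>^3 * \<bar>y\<bar> powr \<alpha> = \<bar>y\<bar> powr (\<alpha>+1+1+1)"
    unfolding e3 by (simp add: power3_eq_cube)
  show "y^2 * \<bar>y\<bar> powr (\<alpha>+1) = \<bar>y\<bar> powr (\<alpha>+1+1+1)"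
    unfolding e3 by (cases "y = 0") (simp_all add: powr_add power2_eq_square)
  show "\<bar>y\<bar> powr (\<alpha>+1+1) * \<bar>y\<bar> = \<bar>y\<bar> powr (\<alpha>+1+1+1)"
    unfolding e3 by (cases "y = 0") (simp_all add: powr_add power2_eq_square)
  show "\<bar>y^3\<bar> * \<bar>y\<bar> powr \<alpha> = \<bar>y\<bar> powr (\<alpha>+1+1+1)" using 1 by (simp add: power_abs)
qed

lemma pow5_bound:
  fixes y \<alpha> L :: real
  assumes "\<bar>y\<bar> \<le> L" "\<alpha> \<le> 2"
  shows "\<bar>y\<bar>^5 \<le> L powr (2 - \<alpha>) * \<bar>y\<bar> powr (\<alpha>+1+1+1)"
proof -
  have e3: "\<bar>y\<bar> powr (\<alpha>+1+1+1) = \<bar>y\<bar> powr \<alpha> * \<bar>y\<bar> * \<bar>y\<bar> * \<bar>y\<bar>"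
    by (simp only: powr_add powr_one abs_ge_zero)
  have e2: "\<bar>y\<bar> powr (2 - \<alpha>) * \<bar>y\<bar> powr \<alpha> = \<bar>y\<bar> powr (1 + 1)"
    by (simp only: powr_add[symmetric]) simp
  have "\<bar>y\<bar> powr (2 - \<alpha>) * \<bar>y\<bar> powr (\<alpha>+1+1+1) = \<bar>y\<bar> powr (1 + 1) * \<bar>y\<bar> * \<bar>y\<bar> * \<bar>y\<bar>"
    unfolding e3 e2[symmetric] by (simp add: mult.assoc)
  also have "\<dots> = \<bar>y\<bar>^5" by (simp only: powr_add powr_one abs_ge_zero) (simp add: eval_nat_numeral)
  finally have eq: "\<bar>y\<bar>^5 = \<bar>y\<bar> powr (2 - \<alpha>) * \<bar>y\<bar> powr (\<alpha>+1+1+1)" by simp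
  show ?thesis unfolding eq
    using assms by (intro mult_right_mono powr_mono2) auto
qed


lemma Dx_0[simp]: "Dx I 0 g = g" by (simp add: Dx_def)
lemma Dx_Suc: "Dx I (Suc k) g = (\<lambda>x. vector_derivative (Dx I k g) (at x within I))"
  by (simp add: Dx_def dx_def)

lemma cont_est:
  fixes hs ht fs ft Y N R :: real
  assumes Y: "Y \<noteq> 0"
    and es: "\<bar>fs - hs*Y/6\<bar> \<le> N*(\<bar>Y\<bar>*R)" and et: "\<bar>ft - ht*Y/6\<bar> \<le> N*(\<bar>Y\<bar>*R)"
  shows "\<bar>hs - ht\<bar> \<le> 6*\<bar>fs - ft\<bar>/\<bar>Y\<bar> + 12*N*R"
proof -
  have eq: "hs - ht = 6*(fs - ft)/Y - 6*(fs - hs*Y/6)/Y + 6*(ft - ht*Y/6)/Y"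
    using Y by (simp add: field_simps)
  have b1: "\<bar>6*(fs - hs*Y/6)/Y\<bar> \<le> 6*N*R"
  proof -
    have "\<bar>6*(fs - hs*Y/6)/Y\<bar> = 6*\<bar>fs - hs*Y/6\<bar>/\<bar>Y\<bar>" unfolding abs_divide abs_mult by simp
    also have "\<dots> \<le> 6*(N*(\<bar>Y\<bar>*R))/\<bar>Y\<bar>" using es by (intro divide_right_mono) auto
    also have "\<dots> = 6*N*R" using Y by simp
    finally show ?thesis .
  qed
  have b2: "\<bar>6*(ft - ht*Y/6)/Y\<bar> \<le> 6*N*R"
  proof -
    have "\<bar>6*(ft - ht*Y/6)/Y\<bar> = 6*\<bar>ft - ht*Y/6\<bar>/\<bar>Y\<bar>" unfolding abs_divide abs_mult by simp
    also have "\<dots> \<le> 6*(N*(\<bar>Y\<bar>*R))/\<bar>Y\<bar>" using et by (intro divide_right_mono) auto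
    also have "\<dots> = 6*N*R" using Y by simp
    finally show ?thesis .
  qed
  have b0: "\<bar>6*(fs - ft)/Y\<bar> = 6*\<bar>fs - ft\<bar>/\<bar>Y\<bar>" unfolding abs_divide abs_mult by simp
  show ?thesis unfolding eq
    using abs_triangle_ineq[of "6*(fs - ft)/Y - 6*(fs - hs*Y/6)/Y" "6*(ft - ht*Y/6)/Y"]
      abs_triangle_ineq4[of "6*(fs - ft)/Y" "6*(fs - hs*Y/6)/Y"] b0 b1 b2 by linarith
qed

context
  fixes \<alpha>1 \<mu>1 :: real and m :: nat and a b \<alpha> \<delta> :: real and f :: "real \<Rightarrow> real \<Rightarrow> real"
  assumes sol: "is_sol \<alpha>1 \<mu>1 m a b \<alpha> \<delta> f"
begin

abbreviation "D k t \<equiv> Dx {a..b} k (f t)"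

definition NN where "NN = max 1 (SUP t\<in>{0..\<delta>}. Ct_norm 3 \<alpha> {a..b} (f t))"

definition Ft where "Ft t x = - (f t x * D 3 t x + \<alpha>1 * D 1 t x * D 2 t x
              + (\<mu>1 / real m) * Dx {a..b} 1 (\<lambda>y. f t y ^ m) x)"

lemma basic: "a < b" "0 < \<alpha>" "\<alpha> \<le> 1" "0 < \<delta>" "2 \<le> m"
  using sol by (auto simp: is_sol_def)

lemma inCt: "t \<in> {0..\<delta>} \<Longrightarrow> in_Ct 3 \<alpha> {a..b} (f t)"
  using sol by (auto simp: is_sol_def in_Linf_Ct_def)

lemma bddCt: "bdd_above ((\<lambda>t. Ct_norm 3 \<alpha> {a..b} (f t)) ` {0..\<delta>})"
  using sol by (auto simp: is_sol_def in_Linf_Ct_def)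

lemma CtM: "t \<in> {0..\<delta>} \<Longrightarrow> Ct_norm 3 \<alpha> {a..b} (f t) \<le> (SUP t\<in>{0..\<delta>}. Ct_norm 3 \<alpha> {a..b} (f t))"
  by (rule cSUP_upper[OF _ bddCt])

lemma NN1: "NN \<ge> 1" by (simp add: NN_def)

lemma Dbound: "t \<in> {0..\<delta>} \<Longrightarrow> j \<le> 3 \<Longrightarrow> x \<in> {a..b} \<Longrightarrow> \<bar>D j t x\<bar> \<le> NN"
  unfolding NN_def by (rule ct_bounds(1)[OF inCt CtM])

lemma Y1b: "t \<in> {0..\<delta>} \<Longrightarrow> x \<in> {a..b} \<Longrightarrow> f t x \<noteq> 0 \<Longrightarrow> \<bar>D 1 t x\<bar> \<le> NN * \<bar>f t x\<bar> powr (2/3)"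
  unfolding NN_def using ct_bounds(7)[OF inCt CtM] by simp

lemma Y2b: "t \<in> {0..\<delta>} \<Longrightarrow> x \<in> {a..b} \<Longrightarrow> f t x \<noteq> 0 \<Longrightarrow> \<bar>D 2 t x\<bar> \<le> NN * \<bar>f t x\<bar> powr (1/3)"
  unfolding NN_def using ct_bounds(8)[OF inCt CtM] by simp

lemma holdN: assumes t: "t \<in> {0..\<delta>}" and x: "x \<in> {a..b}" and y: "y \<in> {a..b}"
  shows "\<bar>D 3 t x - D 3 t y\<bar> \<le> NN * \<bar>x - y\<bar> powr \<alpha>"
proof -
  have "\<bar>D 3 t x - D 3 t y\<bar> \<le> holder_semi \<alpha> {a..b} (D 3 t) * \<bar>x - y\<bar> powr \<alpha>"
    by (rule holder_bound[OF ct_bounds(2)[OF inCt[OF t] CtM[OF t]] x y])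
  also have "\<dots> \<le> NN * \<bar>x - y\<bar> powr \<alpha>"
    unfolding NN_def by (intro mult_right_mono ct_bounds(6)[OF inCt[OF t] CtM[OF t]]) auto
  finally show ?thesis .
qed

lemma holdL: assumes t: "t \<in> {0..\<delta>}" and x: "x \<in> {a..b}" and y: "y \<in> {a..b}"
  shows "\<bar>D 3 t x - D 3 t y\<bar> \<le> Linf_C_norm 3 \<alpha> {a..b} \<delta> f * \<bar>x - y\<bar> powr \<alpha>"
proof -
  have bdC: "bdd_above ((\<lambda>t. C_norm 3 \<alpha> {a..b} (f t)) ` {0..\<delta>})"
  proof -
    obtain B where "\<forall>t\<in>{0..\<delta>}. Ct_norm 3 \<alpha> {a..b} (f t) \<le> B" using bddCt by (auto simp: bdd_above_def)
    then have "\<forall>t\<in>{0..\<delta>}. C_norm 3 \<alpha> {a..b} (f t) \<le> B"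
      using ct_bounds(5)[OF inCt] by blast
    then show ?thesis by (auto simp: bdd_above_def)
  qed
  have "\<bar>D 3 t x - D 3 t y\<bar> \<le> holder_semi \<alpha> {a..b} (D 3 t) * \<bar>x - y\<bar> powr \<alpha>"
    by (rule holder_bound[OF ct_bounds(2)[OF inCt[OF t] CtM[OF t]] x y])
  also have "\<dots> \<le> Linf_C_norm 3 \<alpha> {a..b} \<delta> f * \<bar>x - y\<bar> powr \<alpha>"
  proof (intro mult_right_mono)
    have "holder_semi \<alpha> {a..b} (D 3 t) \<le> C_norm 3 \<alpha> {a..b} (f t)"
      by (rule ct_bounds(4)[OF inCt[OF t] CtM[OF t]])
    also have "\<dots> \<le> Linf_C_norm 3 \<alpha> {a..b} \<delta> f"
      unfolding Linf_C_norm_def by (rule cSUP_upper[OF t bdC])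
    finally show "holder_semi \<alpha> {a..b} (D 3 t) \<le> Linf_C_norm 3 \<alpha> {a..b} \<delta> f" .
  qed auto
  finally show ?thesis .
qed

lemma xder: "t \<in> {0..\<delta>} \<Longrightarrow> j < 3 \<Longrightarrow> x \<in> {a..b} \<Longrightarrow>
    (D j t has_real_derivative D (Suc j) t x) (at x within {a..b})"
  using inCt[of t] by (auto simp: in_Ct_def in_C_def has_real_derivative_iff_has_vector_derivative)

lemma xder': "t \<in> {0..\<delta>} \<Longrightarrow> j < 3 \<Longrightarrow>
    \<forall>x\<in>{a..b}. (D j t has_real_derivative D (Suc j) t x) (at x within {a..b})"
  using xder by blast

lemma Dpow: assumes t: "t \<in> {0..\<delta>}" and x: "x \<in> {a..b}"
  shows "Dx {a..b} 1 (\<lambda>y. f t y ^ m) x = real m * f t x ^ (m - 1) * D 1 t x"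
proof -
  have d: "(f t has_real_derivative D 1 t x) (at x within {a..b})"
    using xder[OF t _ x, of 0] by simp
  have "((\<lambda>y. f t y ^ m) has_real_derivative real m * f t x ^ (m - 1) * D 1 t x) (at x within {a..b})"
    using d by (auto intro!: derivative_eq_intros)
  then have "vector_derivative (\<lambda>y. f t y ^ m) (at x within {a..b}) = real m * f t x ^ (m - 1) * D 1 t x"
    using basic(1) x by (intro vector_derivative_within_closed_interval)
       (auto simp: has_real_derivative_iff_has_vector_derivative)
  then show ?thesis by (simp add: Dx_Suc[where k=0, simplified])
qed

lemma tder: "t \<in> {0..\<delta>} \<Longrightarrow> x \<in> {a..b} \<Longrightarrow> ((\<lambda>s. f s x) has_real_derivative Ft t x) (at t within {0..\<delta>})"
  using sol unfolding is_sol_def Ft_def by auto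

lemma Flim: "x \<in> {a..b} \<Longrightarrow> at x within {a..b} \<noteq> bot"
  using basic(1) by (simp add: trivial_limit_within)

lemma Z1: assumes t: "t \<in> {0..\<delta>}" and x: "x \<in> {a..b}" and z: "f t x = 0"
  shows "D 1 t x = 0"
proof (rule ccontr)
  assume c: "D 1 t x \<noteq> 0"
  have d: "(f t has_real_derivative D 1 t x) (at x within {a..b})"
    using xder[OF t _ x, of 0] by simp
  then have "((\<lambda>y. (f t y - f t x) / (y - x)) \<longlongrightarrow> D 1 t x) (at x within {a..b})"
    by (simp add: has_field_derivative_iff)
  then have "\<forall>\<^sub>F y in at x within {a..b}. (f t y - f t x) / (y - x) \<noteq> 0"
    using c by (rule tendsto_imp_eventually_ne)
  moreover have "\<forall>\<^sub>F y in at x within {a..b}. y \<in> {a..b}"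
    by (auto simp: eventually_at_filter)
  ultimately have ev: "\<forall>\<^sub>F y in at x within {a..b}. \<bar>D 1 t y\<bar> \<le> NN * \<bar>f t y\<bar> powr (2/3)"
    by eventually_elim (use z Y1b[OF t] in auto)
  have c1: "(D 1 t \<longlongrightarrow> D 1 t x) (at x within {a..b})"
    using DERIV_continuous[OF xder[OF t _ x, of 1]] by (simp add: continuous_within)
  have c0: "(f t \<longlongrightarrow> 0) (at x within {a..b})"
    using DERIV_continuous[OF d] z by (simp add: continuous_within)
  have "D 1 t x = 0" by (rule zero_by_limit[OF Flim[OF x] c1 c0 _ ev]) simp
  with c show False by simp
qed

definition KK where "KK = NN + \<bar>\<alpha>1\<bar> * NN^2 + \<bar>\<mu>1\<bar> * NN^(m-1)"

lemma Fbound: assumes t: "t \<in> {0..\<delta>}" and x: "x \<in> {a..b}"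
  shows "\<bar>Ft t x\<bar> \<le> KK * \<bar>f t x\<bar>"
proof -
  let ?u = "f t x"
  have N0: "NN \<ge> 0" using NN1 by simp
  have fb: "\<bar>?u\<bar> \<le> NN" using Dbound[OF t _ x, of 0] by simp
  have t1: "\<bar>?u * D 3 t x\<bar> \<le> NN * \<bar>?u\<bar>"
    using Dbound[OF t _ x, of 3] by (simp add: abs_mult mult.commute mult_left_mono)
  have t2: "\<bar>\<alpha>1 * D 1 t x * D 2 t x\<bar> \<le> \<bar>\<alpha>1\<bar> * NN^2 * \<bar>?u\<bar>"
  proof (cases "?u = 0")
    case True then show ?thesis using Z1[OF t x] by simp
  next
    case False
    have "\<bar>D 1 t x * D 2 t x\<bar> \<le> (NN * \<bar>?u\<bar> powr (2/3)) * (NN * \<bar>?u\<bar> powr (1/3))"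
      unfolding abs_mult using Y1b[OF t x False] Y2b[OF t x False] by (intro mult_mono) auto
    also have "\<dots> = NN^2 * (\<bar>?u\<bar> powr (2/3) * \<bar>?u\<bar> powr (1/3))" by (simp add: power2_eq_square)
    also have "\<bar>?u\<bar> powr (2/3) * \<bar>?u\<bar> powr (1/3) = \<bar>?u\<bar>"
      using False by (simp add: powr_add[symmetric])
    finally show ?thesis by (simp add: abs_mult mult_left_mono mult.assoc)
  qed
  have t3: "\<bar>(\<mu>1 / real m) * Dx {a..b} 1 (\<lambda>y. f t y ^ m) x\<bar> \<le> \<bar>\<mu>1\<bar> * NN^(m-1) * \<bar>?u\<bar>"
  proof -
    have m: "m \<ge> 2" using basic by simp
    have "(\<mu>1 / real m) * Dx {a..b} 1 (\<lambda>y. f t y ^ m) x = \<mu>1 * (?u ^ (m - 1) * D 1 t x)"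
      unfolding Dpow[OF t x] using m by simp
    moreover have "\<bar>?u ^ (m - 1) * D 1 t x\<bar> \<le> NN^(m-1) * \<bar>?u\<bar>"
    proof -
      have e: "m - 1 = Suc (m - 2)" using m by simp
      have "\<bar>?u ^ (m - 1) * D 1 t x\<bar> = \<bar>?u\<bar> * (\<bar>?u\<bar> ^ (m - 2) * \<bar>D 1 t x\<bar>)"
        unfolding e by (simp add: abs_mult power_abs)
      also have "\<dots> \<le> \<bar>?u\<bar> * (NN ^ (m - 2) * NN)"
        using Dbound[OF t _ x, of 1] fb N0 by (intro mult_left_mono mult_mono power_mono) auto
      also have "\<dots> = NN^(m-1) * \<bar>?u\<bar>" unfolding e by simp
      finally show ?thesis .
    qed
    ultimately show ?thesis by (simp add: abs_mult mult_left_mono mult.assoc)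
  qed
  have "\<bar>Ft t x\<bar> \<le> NN * \<bar>?u\<bar> + \<bar>\<alpha>1\<bar> * NN^2 * \<bar>?u\<bar> + \<bar>\<mu>1\<bar> * NN^(m-1) * \<bar>?u\<bar>"
    unfolding Ft_def using t1 t2 t3 by linarith
  also have "\<dots> = KK * \<bar>?u\<bar>" unfolding KK_def by (simp add: algebra_simps)
  finally show ?thesis .
qed

lemma T0: "0 \<in> {0..\<delta>}" using basic by simp

lemma init_zero: "p \<in> {a, b} \<Longrightarrow> j < 3 \<Longrightarrow> D j 0 p = 0"
  using sol by (auto simp: is_sol_def)

lemma tcont: "x \<in> {a..b} \<Longrightarrow> continuous_on {0..\<delta>} (\<lambda>s. f s x)"
  by (auto simp: continuous_on_eq_continuous_within intro!: DERIV_continuous[OF tder])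

lemma zero_end: assumes p: "p \<in> {a, b}" and t: "t \<in> {0..\<delta>}" shows "f t p = 0"
proof -
  have pI: "p \<in> {a..b}" using p basic by auto
  show ?thesis
  proof (rule gronwall0[where u="\<lambda>s. f s p" and u'="\<lambda>s. Ft s p" and K=KK, OF _ _ T0 _ t])
    show "\<forall>s\<in>{0..\<delta>}. ((\<lambda>s. f s p) has_real_derivative Ft s p) (at s within {0..\<delta>})"
      using tder pI by blast
    show "\<forall>s\<in>{0..\<delta>}. \<bar>Ft s p\<bar> \<le> KK * \<bar>f s p\<bar>" using Fbound pI by blast
    show "f 0 p = 0" using init_zero[OF p, of 0] by simp
  qed
qed

lemma pos: assumes t: "t \<in> {0..\<delta>}" and x: "x \<in> {a<..<b}" shows "f t x > 0"
proof (rule ccontr)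
  assume "\<not> f t x > 0"
  then have le: "f t x \<le> 0" by simp
  have xI: "x \<in> {a..b}" using x by auto
  have f0: "f 0 x > 0" using sol x by (auto simp: is_sol_def)
  have "continuous_on {0..t} (\<lambda>s. f s x)"
    by (rule continuous_on_subset[OF tcont[OF xI]]) (use t in auto)
  then obtain s where s: "0 \<le> s" "s \<le> t" "f s x = 0"
    using IVT2'[of "\<lambda>s. f s x" t 0 0] le f0 t by auto
  have "f 0 x = 0"
  proof (rule gronwall0[where u="\<lambda>s. f s x" and u'="\<lambda>s. Ft s x" and K=KK, OF _ _ _ _ T0])
    show "\<forall>s\<in>{0..\<delta>}. ((\<lambda>s. f s x) has_real_derivative Ft s x) (at s within {0..\<delta>})"
      using tder xI by blast
    show "\<forall>s\<in>{0..\<delta>}. \<bar>Ft s x\<bar> \<le> KK * \<bar>f s x\<bar>" using Fbound xI by blast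
    show "s \<in> {0..\<delta>}" using s t by auto
    show "f s x = 0" by fact
  qed
  with f0 show False by simp
qed

lemma D1_end: "p \<in> {a, b} \<Longrightarrow> t \<in> {0..\<delta>} \<Longrightarrow> D 1 t p = 0"
  using Z1 zero_end basic(1) by auto

lemma D2_end: assumes p: "p \<in> {a, b}" and t: "t \<in> {0..\<delta>}" shows "D 2 t p = 0"
proof -
  have pI: "p \<in> {a..b}" using p basic by auto
  have "\<forall>\<^sub>F y in at p within {a..b}. y \<in> {a<..<b}"
    unfolding eventually_at using basic(1) p
    by (rule_tac x="b - a" in exI) (auto simp: dist_real_def)
  then have ev: "\<forall>\<^sub>F y in at p within {a..b}. \<bar>D 2 t y\<bar> \<le> NN * \<bar>f t y\<bar> powr (1/3)"
  proof eventually_elim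
    case (elim y) then show ?case using pos[OF t, of y] by (intro Y2b[OF t]) auto
  qed
  have c2: "(D 2 t \<longlongrightarrow> D 2 t p) (at p within {a..b})"
    using DERIV_continuous[OF xder[OF t _ pI, of 2]] by (simp add: continuous_within)
  have c0: "(f t \<longlongrightarrow> 0) (at p within {a..b})"
    using DERIV_continuous[OF xder[OF t _ pI, of 0]] zero_end[OF p t] by (simp add: continuous_within)
  show ?thesis by (rule zero_by_limit[OF Flim[OF pI] c2 c0 _ ev]) simp
qed


lemma pI: "p \<in> {a, b} \<Longrightarrow> p \<in> {a..b}" using basic(1) by auto

lemma d01: "t \<in> {0..\<delta>} \<Longrightarrow> \<forall>x\<in>{a..b}. (f t has_real_derivative D 1 t x) (at x within {a..b})"
  using xder[of t 0] by simp
lemma d12: "t \<in> {0..\<delta>} \<Longrightarrow> \<forall>x\<in>{a..b}. (D 1 t has_real_derivative D 2 t x) (at x within {a..b})"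
  using xder[of t 1] by (simp add: numeral_2_eq_2)
lemma d23: "t \<in> {0..\<delta>} \<Longrightarrow> \<forall>x\<in>{a..b}. (D 2 t has_real_derivative D 3 t x) (at x within {a..b})"
  using xder[of t 2] by (simp add: numeral_3_eq_3 numeral_2_eq_2)

lemma Linf_nonneg: "0 \<le> Linf_C_norm 3 \<alpha> {a..b} \<delta> f"
proof -
  have bdC: "bdd_above ((\<lambda>t. C_norm 3 \<alpha> {a..b} (f t)) ` {0..\<delta>})"
  proof -
    obtain B where "\<forall>t\<in>{0..\<delta>}. Ct_norm 3 \<alpha> {a..b} (f t) \<le> B" using bddCt by (auto simp: bdd_above_def)
    then have "\<forall>t\<in>{0..\<delta>}. C_norm 3 \<alpha> {a..b} (f t) \<le> B"
      using ct_bounds(5)[OF inCt] by blast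
    then show ?thesis by (auto simp: bdd_above_def)
  qed
  have "0 \<le> holder_semi \<alpha> {a..b} (D 3 0)" by (rule ct_bounds(3)[OF inCt[OF T0] CtM[OF T0]])
  also have "\<dots> \<le> C_norm 3 \<alpha> {a..b} (f 0)" by (rule ct_bounds(4)[OF inCt[OF T0] CtM[OF T0]])
  also have "\<dots> \<le> Linf_C_norm 3 \<alpha> {a..b} \<delta> f"
    unfolding Linf_C_norm_def by (rule cSUP_upper[OF T0 bdC])
  finally show ?thesis .
qed

lemma hE: assumes p: "p \<in> {a, b}" and t: "t \<in> {0..\<delta>}" and x: "x \<in> {a..b}"
    and H: "H \<ge> 0" and hol: "\<And>y. y \<in> {a..b} \<Longrightarrow> \<bar>D 3 t y - D 3 t p\<bar> \<le> H * \<bar>y - p\<bar> powr \<alpha>"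
  shows "\<bar>D 2 t x - D 3 t p * (x - p)\<bar> \<le> H * \<bar>x - p\<bar> powr (\<alpha> + 1)"
    "\<bar>D 1 t x - D 3 t p * (x - p)^2 / 2\<bar> \<le> H * \<bar>x - p\<bar> powr (\<alpha> + 1 + 1)"
    "\<bar>f t x - D 3 t p * (x - p)^3 / 6\<bar> \<le> H * \<bar>x - p\<bar> powr (\<alpha> + 1 + 1 + 1)"
  using taylor3[OF d01[OF t] d12[OF t] d23[OF t] pI[OF p] zero_end[OF p t] D1_end[OF p t] D2_end[OF p t] H _ hol x]
    basic by auto

lemma hEN: assumes p: "p \<in> {a, b}" and t: "t \<in> {0..\<delta>}" and x: "x \<in> {a..b}"
  shows "\<bar>D 2 t x - D 3 t p * (x - p)\<bar> \<le> NN * \<bar>x - p\<bar> powr (\<alpha> + 1)"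
    "\<bar>D 1 t x - D 3 t p * (x - p)^2 / 2\<bar> \<le> NN * \<bar>x - p\<bar> powr (\<alpha> + 1 + 1)"
    "\<bar>f t x - D 3 t p * (x - p)^3 / 6\<bar> \<le> NN * \<bar>x - p\<bar> powr (\<alpha> + 1 + 1 + 1)"
  using hE[OF p t x, of NN] NN1 holdN[OF t _ pI[OF p]] by auto

lemma hEL: assumes p: "p \<in> {a, b}" and t: "t \<in> {0..\<delta>}" and x: "x \<in> {a..b}"
  shows "\<bar>f t x - D 3 t p * (x - p)^3 / 6\<bar> \<le> Linf_C_norm 3 \<alpha> {a..b} \<delta> f * \<bar>x - p\<bar> powr (\<alpha> + 1 + 1 + 1)"
  using hE(3)[OF p t x, of "Linf_C_norm 3 \<alpha> {a..b} \<delta> f"] Linf_nonneg holdL[OF t _ pI[OF p]] by auto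

lemma hS: assumes p: "p \<in> {a, b}" and t: "t \<in> {0..\<delta>}" and x: "x \<in> {a..b}"
  shows "\<bar>D 2 t x\<bar> \<le> NN * \<bar>x - p\<bar>" "\<bar>D 1 t x\<bar> \<le> NN * \<bar>x - p\<bar>^2" "\<bar>f t x\<bar> \<le> NN * \<bar>x - p\<bar>^3"
  using simple_bounds[OF d01[OF t] d12[OF t] d23[OF t] pI[OF p] zero_end[OF p t] D1_end[OF p t] D2_end[OF p t] _ x, of NN]
    Dbound[OF t, of 3] by auto

definition KT where "KT = 2*NN^2 + \<bar>\<alpha>1\<bar> * (2*NN^2) + \<bar>\<mu>1\<bar> * (NN^m * (b - a) powr (2 - \<alpha>))"

lemma Et: assumes p: "p \<in> {a, b}" and t: "t \<in> {0..\<delta>}" and x: "x \<in> {a..b}"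
  shows "\<bar>Ft t x + (1 + 3*\<alpha>1) * (D 3 t p)^2 * (x - p)^3 / 6\<bar> \<le> KT * (\<bar>(x - p)^3\<bar> * \<bar>x - p\<bar> powr \<alpha>)"
proof -
  define y where "y = x - p"
  define H where "H = D 3 t p"
  define u where "u = f t x"
  define d1 where "d1 = D 1 t x"
  define d2 where "d2 = D 2 t x"
  define d3 where "d3 = D 3 t x"
  define P0 where "P0 = \<bar>y\<bar> powr (\<alpha>+1+1+1)"
  have N0: "NN \<ge> 0" using NN1 by simp
  have m: "m \<ge> 2" using basic by simp
  have pI': "p \<in> {a..b}" using pI[OF p] .
  have A: "\<bar>u*d3 - H^2*y^3/6\<bar> \<le> 2*NN^2*P0" "\<bar>d1*d2 - H^2*y^3/2\<bar> \<le> 2*NN^2*P0"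
    using expand_est[of u H y NN P0 d1 "\<bar>y\<bar> powr (\<alpha>+1+1)" d2 "\<bar>y\<bar> powr (\<alpha>+1)" d3 "\<bar>y\<bar> powr \<alpha>"]
      hEN[OF p t x] holdN[OF t x pI'] powr_rels[of y \<alpha>] Dbound[OF t _ pI', of 3] Dbound[OF t _ x, of 3]
      hS(1)[OF p t x] N0
    unfolding y_def H_def u_def d1_def d2_def d3_def P0_def by auto
  have A3: "\<bar>u^(m-1)*d1\<bar> \<le> NN^m * (b - a) powr (2 - \<alpha>) * P0"
  proof -
    have e: "m - 1 = Suc (m - 2)" using m by simp
    have em: "NN^m = NN^(m-2) * NN * NN" using m
      by (metis (no_types, lifting) add_2_eq_Suc' le_add_diff_inverse2 mult.assoc power_Suc2)
    have "\<bar>u^(m-1)*d1\<bar> = \<bar>u\<bar>^(m-2) * \<bar>u\<bar> * \<bar>d1\<bar>"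
      unfolding e by (simp add: abs_mult power_abs)
    also have "\<dots> \<le> NN^(m-2) * (NN * \<bar>y\<bar>^3) * (NN * \<bar>y\<bar>^2)"
      using Dbound[OF t _ x, of 0] hS(2,3)[OF p t x] N0 unfolding u_def d1_def y_def
      by (intro mult_mono power_mono) auto
    also have "\<dots> = NN^m * \<bar>y\<bar>^5" unfolding em by (simp add: eval_nat_numeral)
    also have "\<dots> \<le> NN^m * ((b - a) powr (2 - \<alpha>) * P0)"
      unfolding P0_def using x pI' basic N0 by (intro mult_left_mono pow5_bound) (auto simp: y_def)
    finally show ?thesis by (simp add: mult.assoc)
  qed
  have Fe: "Ft t x = - (u * d3 + \<alpha>1 * d1 * d2 + \<mu>1 * (u^(m-1) * d1))"
    unfolding Ft_def Dpow[OF t x] u_def d1_def d2_def d3_def using m by simp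
  have eq: "Ft t x + (1 + 3*\<alpha>1) * H^2 * y^3 / 6 = - (u*d3 - H^2*y^3/6) - \<alpha>1 * (d1*d2 - H^2*y^3/2) - \<mu>1 * (u^(m-1)*d1)"
    unfolding Fe by (simp add: field_simps)
  have "\<bar>Ft t x + (1 + 3*\<alpha>1) * H^2 * y^3 / 6\<bar> \<le> \<bar>u*d3 - H^2*y^3/6\<bar> + \<bar>\<alpha>1\<bar> * \<bar>d1*d2 - H^2*y^3/2\<bar> + \<bar>\<mu>1\<bar> * \<bar>u^(m-1)*d1\<bar>"
    unfolding eq abs_mult[symmetric] by linarith
  also have "\<dots> \<le> 2*NN^2*P0 + \<bar>\<alpha>1\<bar> * (2*NN^2*P0) + \<bar>\<mu>1\<bar> * (NN^m * (b - a) powr (2 - \<alpha>) * P0)"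
    using A A3 by (intro add_mono mult_left_mono) auto
  also have "\<dots> = KT * P0" unfolding KT_def by (simp add: algebra_simps)
  finally show ?thesis unfolding H_def y_def P0_def powr_rels(4) .
qed

lemma hcont: assumes p: "p \<in> {a, b}" and t: "t \<in> {0..\<delta>}"
  shows "continuous (at t within {0..\<delta>}) (\<lambda>s. D 3 s p)"
  unfolding continuous_within tendsto_iff
proof (intro allI impI)
  fix \<epsilon> :: real assume e: "\<epsilon> > 0"
  have pI': "p \<in> {a..b}" using pI[OF p] .
  obtain x where x: "x \<in> {a..b}" "x \<noteq> p" and xs: "12 * NN * \<bar>x - p\<bar> powr \<alpha> < \<epsilon>/2"
    using witness[OF basic(1) pI' basic(2), of "\<epsilon>/2" "12 * NN"] e by auto
  define Y where "Y = (x - p)^3"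
  have Y: "Y \<noteq> 0" using x by (simp add: Y_def)
  have "((\<lambda>s. f s x) \<longlongrightarrow> f t x) (at t within {0..\<delta>})"
    using DERIV_continuous[OF tder[OF t x(1)]] by (simp add: continuous_within)
  moreover have "\<epsilon> * \<bar>Y\<bar> / 12 > 0" using e Y by simp
  ultimately have "\<forall>\<^sub>F s in at t within {0..\<delta>}. dist (f s x) (f t x) < \<epsilon> * \<bar>Y\<bar> / 12"
    by (rule tendstoD)
  moreover have "\<forall>\<^sub>F s in at t within {0..\<delta>}. s \<in> {0..\<delta>}" by (auto simp: eventually_at_filter)
  ultimately show "\<forall>\<^sub>F s in at t within {0..\<delta>}. dist (D 3 s p) (D 3 t p) < \<epsilon>"
  proof eventually_elim
    case (elim s)
    have "\<bar>D 3 s p - D 3 t p\<bar> \<le> 6*\<bar>f s x - f t x\<bar>/\<bar>Y\<bar> + 12*NN*\<bar>x - p\<bar> powr \<alpha>"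
      by (rule cont_est[OF Y]) (use hEN(3)[OF p elim(2) x(1)] hEN(3)[OF p t x(1)] powr_rels(4)[of "x - p" \<alpha>] in \<open>auto simp: Y_def\<close>)
    also have "6*\<bar>f s x - f t x\<bar>/\<bar>Y\<bar> < \<epsilon>/2"
      using elim(1) Y by (simp add: dist_real_def field_simps)
    finally show ?case using xs by (simp add: dist_real_def)
  qed
qed

lemma hder: assumes p: "p \<in> {a, b}" and t: "t \<in> {0..\<delta>}"
  shows "((\<lambda>s. D 3 s p) has_real_derivative - (1 + 3*\<alpha>1) * (D 3 t p)^2) (at t within {0..\<delta>})"
  unfolding has_field_derivative_iff tendsto_iff
proof (intro allI impI)
  fix \<epsilon> :: real assume e: "\<epsilon> > 0"
  define c where "c = 1 + 3*\<alpha>1"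
  have pI': "p \<in> {a..b}" using pI[OF p] .
  have "continuous (at t within {0..\<delta>}) (\<lambda>s. c * (D 3 s p)^2)"
    using hcont[OF p t] by (intro continuous_intros)
  then have "\<forall>\<^sub>F s in at t within {0..\<delta>}. dist (c * (D 3 s p)^2) (c * (D 3 t p)^2) < \<epsilon>/2"
    unfolding continuous_within using e by (intro tendstoD) auto
  then obtain \<eta> where eta: "\<eta> > 0"
    and etaP: "\<And>s. s \<in> {0..\<delta>} \<Longrightarrow> s \<noteq> t \<Longrightarrow> dist s t < \<eta> \<Longrightarrow> \<bar>c * (D 3 s p)^2 - c * (D 3 t p)^2\<bar> < \<epsilon>/2"
    unfolding eventually_at by (auto simp: dist_real_def)
  show "\<forall>\<^sub>F s in at t within {0..\<delta>}. dist ((D 3 s p - D 3 t p) / (s - t)) (- (1 + 3*\<alpha>1) * (D 3 t p)^2) < \<epsilon>"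
    unfolding eventually_at
  proof (intro exI[of _ \<eta>] conjI ballI impI eta)
    fix s assume s: "s \<in> {0..\<delta>}" and st: "s \<noteq> t \<and> dist s t < \<eta>"
    have ds: "s - t \<noteq> 0" using st by simp
    have e2: "\<epsilon>/2 > 0" using e by simp
    obtain x where x: "x \<in> {a..b}" "x \<noteq> p" and xs: "(6 * KT + 12 * NN / \<bar>s - t\<bar>) * \<bar>x - p\<bar> powr \<alpha> < \<epsilon>/2"
      using witness[OF basic(1) pI' basic(2) e2, of "6 * KT + 12 * NN / \<bar>s - t\<bar>"] by auto
    define Y where "Y = (x - p)^3"
    have Y: "Y \<noteq> 0" using x by (simp add: Y_def)
    obtain \<xi> where xi: "\<xi> \<in> {0..\<delta>}" "\<bar>\<xi> - t\<bar> < \<bar>s - t\<bar>" and mv: "f s x - f t x = Ft \<xi> x * (s - t)"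
      using mvt_sym[where u="\<lambda>s. f s x" and u'="\<lambda>s. Ft s x", OF _ s t] tder[OF _ x(1)] st by blast
    have q: "\<bar>(D 3 s p - D 3 t p)/(s - t) - (- c * (D 3 t p)^2)\<bar>
        \<le> \<bar>c * (D 3 \<xi> p)^2 - c * (D 3 t p)^2\<bar> + 6*KT*\<bar>x - p\<bar> powr \<alpha> + 12*NN*\<bar>x - p\<bar> powr \<alpha>/\<bar>s - t\<bar>"
    proof (rule quot_est[OF Y ds _ _ mv])
      show "\<bar>f s x - D 3 s p * Y / 6\<bar> \<le> NN * (\<bar>Y\<bar> * \<bar>x - p\<bar> powr \<alpha>)"
        using hEN(3)[OF p s x(1)] powr_rels(4)[of "x - p" \<alpha>] by (simp add: Y_def)
      show "\<bar>f t x - D 3 t p * Y / 6\<bar> \<le> NN * (\<bar>Y\<bar> * \<bar>x - p\<bar> powr \<alpha>)"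
        using hEN(3)[OF p t x(1)] powr_rels(4)[of "x - p" \<alpha>] by (simp add: Y_def)
      show "\<bar>Ft \<xi> x + c * (D 3 \<xi> p)^2 * Y / 6\<bar> \<le> KT * (\<bar>Y\<bar> * \<bar>x - p\<bar> powr \<alpha>)"
        using Et[OF p xi(1) x(1)] by (simp add: Y_def c_def)
    qed
    have c1: "\<bar>c * (D 3 \<xi> p)^2 - c * (D 3 t p)^2\<bar> < \<epsilon>/2"
    proof (cases "\<xi> = t")
      case True then show ?thesis using e by simp
    next
      case False then show ?thesis using etaP[OF xi(1) False] xi(2) st by (simp add: dist_real_def)
    qed
    have c2: "6*KT*\<bar>x - p\<bar> powr \<alpha> + 12*NN*\<bar>x - p\<bar> powr \<alpha>/\<bar>s - t\<bar> = (6 * KT + 12 * NN / \<bar>s - t\<bar>) * \<bar>x - p\<bar> powr \<alpha>"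
      by (simp add: algebra_simps)
    show "dist ((D 3 s p - D 3 t p) / (s - t)) (- (1 + 3*\<alpha>1) * (D 3 t p)^2) < \<epsilon>"
      using q c1 c2 xs unfolding dist_real_def c_def by linarith
  qed
qed

end

lemma endpt_eq:
  assumes sf: "is_sol \<alpha>1 \<mu>1 m a b \<alpha> \<delta> f" and sg: "is_sol \<alpha>1 \<mu>1 m a b \<alpha> \<delta> g"
    and p: "p \<in> {a, b}" and i: "\<forall>k\<le>3. Dx {a..b} k (f 0) p = Dx {a..b} k (g 0) p"
    and t: "t \<in> {0..\<delta>}" and k: "k \<le> 3"
  shows "Dx {a..b} k (f t) p = Dx {a..b} k (g t) p"
proof -
  have "k = 0 \<or> k = 1 \<or> k = 2 \<or> k = 3" using k by auto
  moreover have "Dx {a..b} 0 (f t) p = Dx {a..b} 0 (g t) p"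
    using zero_end[OF sf p t] zero_end[OF sg p t] by simp
  moreover have "Dx {a..b} 1 (f t) p = Dx {a..b} 1 (g t) p"
    using D1_end[OF sf p t] D1_end[OF sg p t] by simp
  moreover have "Dx {a..b} 2 (f t) p = Dx {a..b} 2 (g t) p"
    using D2_end[OF sf p t] D2_end[OF sg p t] by simp
  moreover have "Dx {a..b} 3 (f t) p = Dx {a..b} 3 (g t) p"
  proof (rule ode_unique[where c="1 + 3*\<alpha>1", OF _ _ _ _ t])
    show "0 \<le> \<delta>" using basic[OF sf] by simp
    show "\<forall>t\<in>{0..\<delta>}. ((\<lambda>s. Dx {a..b} 3 (f s) p) has_real_derivative - (1 + 3*\<alpha>1) * (Dx {a..b} 3 (f t) p)^2) (at t within {0..\<delta>})"
      using hder[OF sf p] by blast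
    show "\<forall>t\<in>{0..\<delta>}. ((\<lambda>s. Dx {a..b} 3 (g s) p) has_real_derivative - (1 + 3*\<alpha>1) * (Dx {a..b} 3 (g t) p)^2) (at t within {0..\<delta>})"
      using hder[OF sg p] by blast
    show "Dx {a..b} 3 (f 0) p = Dx {a..b} 3 (g 0) p" using i by simp
  qed
  ultimately show ?thesis by auto
qed

lemma endpt_beta:
  assumes sf: "is_sol \<alpha>1 \<mu>1 m a b \<alpha> \<delta> f" and p: "p \<in> {a, b}"
    and bd: "\<forall>t\<in>{0..\<delta>}. (\<beta> has_real_derivative (- (2 + 6 * \<alpha>1) * \<beta> t ^ 4)) (at t within {0..\<delta>})"
    and b0: "6 * \<beta> 0 ^ 3 = Dx {a..b} 3 (f 0) p"
    and t: "t \<in> {0..\<delta>}"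
  shows "Dx {a..b} 3 (f t) p = 6 * \<beta> t ^ 3"
proof (rule ode_unique[of \<delta> "\<lambda>s. Dx {a..b} 3 (f s) p" "1 + 3*\<alpha>1" "\<lambda>s. 6 * \<beta> s ^ 3" t])
  show "t \<in> {0..\<delta>}" by (rule t)
  show "0 \<le> \<delta>" using basic[OF sf] by simp
  show "\<forall>t\<in>{0..\<delta>}. ((\<lambda>s. Dx {a..b} 3 (f s) p) has_real_derivative - (1 + 3*\<alpha>1) * (Dx {a..b} 3 (f t) p)^2) (at t within {0..\<delta>})"
    using hder[OF sf p] by blast
  show "\<forall>t\<in>{0..\<delta>}. ((\<lambda>s. 6 * \<beta> s ^ 3) has_real_derivative - (1 + 3*\<alpha>1) * (6 * \<beta> t ^ 3)^2) (at t within {0..\<delta>})"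
  proof
    fix t assume t: "t \<in> {0..\<delta>}"
    have bt: "(\<beta> has_real_derivative (- (2 + 6 * \<alpha>1) * \<beta> t ^ 4)) (at t within {0..\<delta>})"
      using bd t by blast
    show "((\<lambda>s. 6 * \<beta> s ^ 3) has_real_derivative - (1 + 3*\<alpha>1) * (6 * \<beta> t ^ 3)^2) (at t within {0..\<delta>})"
      using bt by (auto intro!: derivative_eq_intros simp: eval_nat_numeral algebra_simps)
  qed
  show "Dx {a..b} 3 (f 0) p = 6 * \<beta> 0 ^ 3" using b0 by simp
qed

lemma endpt_est:
  assumes sf: "is_sol \<alpha>1 \<mu>1 m a b \<alpha> \<delta> f" and p: "p \<in> {a, b}"
    and bd: "\<forall>t\<in>{0..\<delta>}. (\<beta> has_real_derivative (- (2 + 6 * \<alpha>1) * \<beta> t ^ 4)) (at t within {0..\<delta>})"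
    and b0: "6 * \<beta> 0 ^ 3 = Dx {a..b} 3 (f 0) p"
    and t: "t \<in> {0..\<delta>}" and x: "x \<in> {a..b}"
  shows "\<bar>f t x - (\<beta> t * (x - p)) ^ 3\<bar> \<le> 1 * Linf_C_norm 3 \<alpha> {a..b} \<delta> f * \<bar>x - p\<bar> powr (3 + \<alpha>)"
proof -
  have h: "Dx {a..b} 3 (f t) p = 6 * \<beta> t ^ 3" by (rule endpt_beta[OF sf p bd b0 t])
  have e1: "(\<beta> t * (x - p)) ^ 3 = Dx {a..b} 3 (f t) p * (x - p)^3 / 6"
    unfolding h by (simp add: power_mult_distrib)
  have e2: "\<alpha> + 1 + 1 + 1 = 3 + \<alpha>" by simp
  show ?thesis using hEL[OF sf p t x] unfolding e1 e2 by simp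
qed

theorem lemma3p1:
  shows "(\<forall>\<alpha>1 \<mu>1 m a b \<alpha> \<delta> f. is_sol \<alpha>1 \<mu>1 m a b \<alpha> \<delta> f \<longrightarrow>
            (\<forall>t\<in>{0..\<delta>}. f t a = 0 \<and> f t b = 0 \<and> (\<forall>x\<in>{a<..<b}. 0 < f t x)))
       \<and> (\<forall>\<alpha>1 \<mu>1 m a b \<alpha> \<delta> f g. is_sol \<alpha>1 \<mu>1 m a b \<alpha> \<delta> f \<and> is_sol \<alpha>1 \<mu>1 m a b \<alpha> \<delta> g \<and>
            (\<forall>k\<le>3. Dx {a..b} k (f 0) a = Dx {a..b} k (g 0) a) \<longrightarrow>
            (\<forall>t\<in>{0..\<delta>}. \<forall>k\<le>3. Dx {a..b} k (f t) a = Dx {a..b} k (g t) a))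
       \<and> (\<forall>\<alpha>1 \<mu>1 m a b \<alpha> \<delta> f g. is_sol \<alpha>1 \<mu>1 m a b \<alpha> \<delta> f \<and> is_sol \<alpha>1 \<mu>1 m a b \<alpha> \<delta> g \<and>
            (\<forall>k\<le>3. Dx {a..b} k (f 0) b = Dx {a..b} k (g 0) b) \<longrightarrow>
            (\<forall>t\<in>{0..\<delta>}. \<forall>k\<le>3. Dx {a..b} k (f t) b = Dx {a..b} k (g t) b))
       \<and> (\<exists>C::real. \<forall>\<alpha>1 \<mu>1 m a b \<alpha> \<delta> f.
            is_sol \<alpha>1 \<mu>1 m a b \<alpha> \<delta> f \<longrightarrow>
            (\<forall>\<beta>. (\<forall>t\<in>{0..\<delta>}. (\<beta> has_real_derivative (- (2 + 6 * \<alpha>1) * \<beta> t ^ 4)) (at t within {0..\<delta>}))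
                 \<and> 6 * \<beta> 0 ^ 3 = Dx {a..b} 3 (f 0) a \<longrightarrow>
                 (\<forall>t\<in>{0..\<delta>}. \<forall>\<^sub>F x in at_right a.
                    \<bar>f t x - (\<beta> t * (x - a)) ^ 3\<bar>
                      \<le> C * Linf_C_norm 3 \<alpha> {a..b} \<delta> f * \<bar>x - a\<bar> powr (3 + \<alpha>))) \<and>
            (\<forall>\<beta>. (\<forall>t\<in>{0..\<delta>}. (\<beta> has_real_derivative (- (2 + 6 * \<alpha>1) * \<beta> t ^ 4)) (at t within {0..\<delta>}))
                 \<and> 6 * \<beta> 0 ^ 3 = Dx {a..b} 3 (f 0) b \<longrightarrow>
                 (\<forall>t\<in>{0..\<delta>}. \<forall>\<^sub>F x in at_left b.
                    \<bar>f t x - (\<beta> t * (x - b)) ^ 3\<bar>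
                      \<le> C * Linf_C_norm 3 \<alpha> {a..b} \<delta> f * \<bar>x - b\<bar> powr (3 + \<alpha>))))"
proof (intro conjI)
  show "\<forall>\<alpha>1 \<mu>1 m a b \<alpha> \<delta> f. is_sol \<alpha>1 \<mu>1 m a b \<alpha> \<delta> f \<longrightarrow>
            (\<forall>t\<in>{0..\<delta>}. f t a = 0 \<and> f t b = 0 \<and> (\<forall>x\<in>{a<..<b}. 0 < f t x))"
  proof (intro allI impI ballI conjI)
    fix \<alpha>1 \<mu>1 m a b \<alpha> \<delta> f t x
    assume sf: "is_sol \<alpha>1 \<mu>1 m a b \<alpha> \<delta> f" and t: "t \<in> {0..\<delta>}"
    show "f t a = 0" using zero_end[OF sf _ t, of a] by simp
    show "f t b = 0" using zero_end[OF sf _ t, of b] by simp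
    assume "x \<in> {a<..<b}"
    then show "0 < f t x" using pos[OF sf t] by simp
  qed
  show "\<forall>\<alpha>1 \<mu>1 m a b \<alpha> \<delta> f g. is_sol \<alpha>1 \<mu>1 m a b \<alpha> \<delta> f \<and> is_sol \<alpha>1 \<mu>1 m a b \<alpha> \<delta> g \<and>
            (\<forall>k\<le>3. Dx {a..b} k (f 0) a = Dx {a..b} k (g 0) a) \<longrightarrow>
            (\<forall>t\<in>{0..\<delta>}. \<forall>k\<le>3. Dx {a..b} k (f t) a = Dx {a..b} k (g t) a)"
  proof (intro allI impI ballI)
    fix \<alpha>1 \<mu>1 m a b \<alpha> \<delta> f g t and k :: nat
    assume h: "is_sol \<alpha>1 \<mu>1 m a b \<alpha> \<delta> f \<and> is_sol \<alpha>1 \<mu>1 m a b \<alpha> \<delta> g \<and>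
            (\<forall>k\<le>3. Dx {a..b} k (f 0) a = Dx {a..b} k (g 0) a)" and t: "t \<in> {0..\<delta>}" and k: "k \<le> 3"
    show "Dx {a..b} k (f t) a = Dx {a..b} k (g t) a"
      using h by (intro endpt_eq[OF _ _ _ _ t k]) auto
  qed
  show "\<forall>\<alpha>1 \<mu>1 m a b \<alpha> \<delta> f g. is_sol \<alpha>1 \<mu>1 m a b \<alpha> \<delta> f \<and> is_sol \<alpha>1 \<mu>1 m a b \<alpha> \<delta> g \<and>
            (\<forall>k\<le>3. Dx {a..b} k (f 0) b = Dx {a..b} k (g 0) b) \<longrightarrow>
            (\<forall>t\<in>{0..\<delta>}. \<forall>k\<le>3. Dx {a..b} k (f t) b = Dx {a..b} k (g t) b)"
  proof (intro allI impI ballI)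
    fix \<alpha>1 \<mu>1 m a b \<alpha> \<delta> f g t and k :: nat
    assume h: "is_sol \<alpha>1 \<mu>1 m a b \<alpha> \<delta> f \<and> is_sol \<alpha>1 \<mu>1 m a b \<alpha> \<delta> g \<and>
            (\<forall>k\<le>3. Dx {a..b} k (f 0) b = Dx {a..b} k (g 0) b)" and t: "t \<in> {0..\<delta>}" and k: "k \<le> 3"
    show "Dx {a..b} k (f t) b = Dx {a..b} k (g t) b"
      using h by (intro endpt_eq[OF _ _ _ _ t k]) auto
  qed
  show "\<exists>C::real. \<forall>\<alpha>1 \<mu>1 m a b \<alpha> \<delta> f.
            is_sol \<alpha>1 \<mu>1 m a b \<alpha> \<delta> f \<longrightarrow>
            (\<forall>\<beta>. (\<forall>t\<in>{0..\<delta>}. (\<beta> has_real_derivative (- (2 + 6 * \<alpha>1) * \<beta> t ^ 4)) (at t within {0..\<delta>}))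
                 \<and> 6 * \<beta> 0 ^ 3 = Dx {a..b} 3 (f 0) a \<longrightarrow>
                 (\<forall>t\<in>{0..\<delta>}. \<forall>\<^sub>F x in at_right a.
                    \<bar>f t x - (\<beta> t * (x - a)) ^ 3\<bar>
                      \<le> C * Linf_C_norm 3 \<alpha> {a..b} \<delta> f * \<bar>x - a\<bar> powr (3 + \<alpha>))) \<and>
            (\<forall>\<beta>. (\<forall>t\<in>{0..\<delta>}. (\<beta> has_real_derivative (- (2 + 6 * \<alpha>1) * \<beta> t ^ 4)) (at t within {0..\<delta>}))
                 \<and> 6 * \<beta> 0 ^ 3 = Dx {a..b} 3 (f 0) b \<longrightarrow>
                 (\<forall>t\<in>{0..\<delta>}. \<forall>\<^sub>F x in at_left b.
                    \<bar>f t x - (\<beta> t * (x - b)) ^ 3\<bar>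
                      \<le> C * Linf_C_norm 3 \<alpha> {a..b} \<delta> f * \<bar>x - b\<bar> powr (3 + \<alpha>)))"
  proof (intro exI[of _ 1] allI impI conjI ballI)
    fix \<alpha>1 \<mu>1 m a b \<alpha> \<delta> f \<beta> t
    assume sf: "is_sol \<alpha>1 \<mu>1 m a b \<alpha> \<delta> f"
    {
      assume bb: "(\<forall>t\<in>{0..\<delta>}. (\<beta> has_real_derivative (- (2 + 6 * \<alpha>1) * \<beta> t ^ 4)) (at t within {0..\<delta>}))
                 \<and> 6 * \<beta> 0 ^ 3 = Dx {a..b} 3 (f 0) a" and t: "t \<in> {0..\<delta>}"
      show "\<forall>\<^sub>F x in at_right a. \<bar>f t x - (\<beta> t * (x - a)) ^ 3\<bar>
                      \<le> 1 * Linf_C_norm 3 \<alpha> {a..b} \<delta> f * \<bar>x - a\<bar> powr (3 + \<alpha>)"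
        using eventually_at_right_real[OF basic(1)[OF sf]]
        by eventually_elim (rule endpt_est[OF sf _ _ _ t], use bb in auto)
    }
    {
      assume bb: "(\<forall>t\<in>{0..\<delta>}. (\<beta> has_real_derivative (- (2 + 6 * \<alpha>1) * \<beta> t ^ 4)) (at t within {0..\<delta>}))
                 \<and> 6 * \<beta> 0 ^ 3 = Dx {a..b} 3 (f 0) b" and t: "t \<in> {0..\<delta>}"
      show "\<forall>\<^sub>F x in at_left b. \<bar>f t x - (\<beta> t * (x - b)) ^ 3\<bar>
                      \<le> 1 * Linf_C_norm 3 \<alpha> {a..b} \<delta> f * \<bar>x - b\<bar> powr (3 + \<alpha>)"
        using eventually_at_left_real[OF basic(1)[OF sf]]
        by eventually_elim (rule endpt_est[OF sf _ _ _ t], use bb in auto)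
    }
  qed
qed

end
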